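(* Let $n\ge2$ and $G=\frac1n(1,1)$ acting on $\Bbbk_J[u,v]$. Then $\Bbbk_J[u,v]^G\cong\Bbbk\langle X_0,\dots,X_n\rangle/I$, via $X_i\mapsto\frac{(-1)^i}{i!}u^{n-i}v^i$, where $I$ is the two-sided ideal generated by $$\sum_{k=0}^{j}\binom{n-i}{k}X_{j-k}X_i-\sum_{\ell=0}^{i}\binom{n-j}{\ell}X_{i-\ell}X_j\qquad(0\le i<j\le n),$$ $$iX_iX_j-(j+1)X_{i-1}X_{j+1}+\big(n-1-(j-i)\big)X_{i-1}X_j\qquad(1\le i\le j<n).$$
   Context: $\Bbbk$ is algebraically closed of characteristic $0$; $\Bbbk_J[u,v]=\Bbbk\langle u,v\rangle/(vu-uv-u^2)$, graded with $\deg u=\deg v=1$. $\frac1n(1,1)$ is the cyclic group generated by $\mathrm{diag}(\omega_n,\omega_n)$, $\omega_n$ a primitive $n$th root of unity, acting by $u\mapsto\omega_nu$, $v\mapsto\omega_nv$; its invariant ring is the $n$th Veronese subring $\bigoplus_{i\ge0}\Bbbk_J[u,v]_{ni}$. *)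

theory Defs
  imports Main "HOL-Library.Function_Algebras" "HOL-Computational_Algebra.Polynomial"
begin

text \<open>Free associative algebra k<A> over an alphabet: an element is a function
  from words ('a list) to coefficients in 'k with finite support, supported on
  words over the alphabet A.  Addition/subtraction are pointwise (Function_Algebras);
  the algebra product is the concatenation (convolution) product fmul.\<close>

definition fsupp :: "('a list \<Rightarrow> 'k::zero) \<Rightarrow> bool" where
  "fsupp p \<longleftrightarrow> finite {w. p w \<noteq> 0}"

definition falg :: "'a set \<Rightarrow> ('a list \<Rightarrow> 'k::zero) set" where
  "falg A = {p. fsupp p \<and> (\<forall>w. p w \<noteq> 0 \<longrightarrow> set w \<subseteq> A)}"

definition fword :: "'a list \<Rightarrow> ('a list \<Rightarrow> 'k::comm_ring_1)" where
  "fword w = (\<lambda>w'. if w' = w then 1 else 0)"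

definition fsmult :: "'k::comm_ring_1 \<Rightarrow> ('a list \<Rightarrow> 'k) \<Rightarrow> ('a list \<Rightarrow> 'k)" where
  "fsmult c p = (\<lambda>w. c * p w)"

definition fmul :: "('a list \<Rightarrow> 'k::comm_ring_1) \<Rightarrow> ('a list \<Rightarrow> 'k) \<Rightarrow> ('a list \<Rightarrow> 'k)" where
  "fmul p q = (\<lambda>w. \<Sum>i\<le>length w. p (take i w) * q (drop i w))"

inductive_set fideal :: "'a set \<Rightarrow> ('a list \<Rightarrow> 'k::comm_ring_1) set \<Rightarrow> ('a list \<Rightarrow> 'k) set"
  for A R where
  gen: "r \<in> R \<Longrightarrow> r \<in> fideal A R"
| zero: "0 \<in> fideal A R"
| add: "a \<in> fideal A R \<Longrightarrow> b \<in> fideal A R \<Longrightarrow> a + b \<in> fideal A R"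
| lmul: "a \<in> fideal A R \<Longrightarrow> c \<in> falg A \<Longrightarrow> fmul c a \<in> fideal A R"
| rmul: "a \<in> fideal A R \<Longrightarrow> c \<in> falg A \<Longrightarrow> fmul a c \<in> fideal A R"

definition fmono :: "('a \<Rightarrow> ('b list \<Rightarrow> 'k::comm_ring_1)) \<Rightarrow> 'a list \<Rightarrow> ('b list \<Rightarrow> 'k)" where
  "fmono f w = foldr (\<lambda>x acc. fmul (f x) acc) w (fword [])"

definition fsubst :: "('a \<Rightarrow> ('b list \<Rightarrow> 'k::comm_ring_1)) \<Rightarrow> ('a list \<Rightarrow> 'k) \<Rightarrow> ('b list \<Rightarrow> 'k)" where
  "fsubst f p = (\<Sum>w\<in>{w. p w \<noteq> 0}. fsmult (p w) (fmono f w))"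

datatype uv = U | V

definition jordan_rel :: "uv list \<Rightarrow> 'k::comm_ring_1" where
  "jordan_rel = fword [V, U] - fword [U, V] - fword [U, U]"

definition jordan_ideal :: "(uv list \<Rightarrow> 'k::comm_ring_1) set" where
  "jordan_ideal = fideal UNIV {jordan_rel}"

text \<open>Elements of k<u,v> whose class lies in the n-th Veronese subring
  \<Oplus>_i k_J[u,v]_{ni} (= invariant ring of 1/n(1,1)): combinations of words of
  length divisible by n.\<close>
definition veronese :: "nat \<Rightarrow> (uv list \<Rightarrow> 'k::comm_ring_1) \<Rightarrow> bool" where
  "veronese n q \<longleftrightarrow> q \<in> falg UNIV \<and> (\<forall>w. q w \<noteq> 0 \<longrightarrow> n dvd length w)"

definition jgen :: "nat \<Rightarrow> nat \<Rightarrow> (uv list \<Rightarrow> 'k::field_char_0)" where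
  "jgen n i = fsmult ((-1) ^ i / fact i) (fword (replicate (n - i) U @ replicate i V))"

definition rel1 :: "nat \<Rightarrow> nat \<Rightarrow> nat \<Rightarrow> (nat list \<Rightarrow> 'k::field_char_0)" where
  "rel1 n i j = (\<Sum>k\<le>j. fsmult (of_nat ((n - i) choose k)) (fword [j - k, i]))
              - (\<Sum>l\<le>i. fsmult (of_nat ((n - j) choose l)) (fword [i - l, j]))"

definition rel2 :: "nat \<Rightarrow> nat \<Rightarrow> nat \<Rightarrow> (nat list \<Rightarrow> 'k::field_char_0)" where
  "rel2 n i j = fsmult (of_nat i) (fword [i, j])
              - fsmult (of_nat (j + 1)) (fword [i - 1, j + 1])
              + fsmult (of_int (int n - 1 - (int j - int i))) (fword [i - 1, j])"

definition relsI :: "nat \<Rightarrow> (nat list \<Rightarrow> 'k::field_char_0) set" where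
  "relsI n = {rel1 n i j | i j. i < j \<and> j \<le> n} \<union> {rel2 n i j | i j. 1 \<le> i \<and> i \<le> j \<and> j < n}"

end

theory Submission
  imports Defs "HOL-Computational_Algebra.Formal_Power_Series"
begin
lemma sum_fun_apply: "(\<Sum>i\<in>S. f i) x = (\<Sum>i\<in>S. f i x)"
  by (induction S rule: infinite_finite_induct) auto

lemma fword_apply: "fword w v = (if v = w then 1 else 0)" by (simp add: fword_def)
lemma fsmult_apply[simp]: "fsmult c p w = c * p w" by (simp add: fsmult_def)

definition Sp :: "'a list \<Rightarrow> ('a list \<times> 'a list) set" where
  "Sp w = {(a,b). a @ b = w}"

lemma Sp_image: "Sp w = (\<lambda>i. (take i w, drop i w)) ` {..length w}"
proof
  show "Sp w \<subseteq> (\<lambda>i. (take i w, drop i w)) ` {..length w}"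
  proof
    fix s assume "s \<in> Sp w"
    then obtain a b where s: "s = (a,b)" "a @ b = w" by (auto simp: Sp_def)
    then show "s \<in> (\<lambda>i. (take i w, drop i w)) ` {..length w}"
      by (intro image_eqI[where x="length a"]) auto
  qed
qed (auto simp: Sp_def)

lemma finite_Sp[simp]: "finite (Sp w)" by (simp add: Sp_image)

lemma fmul_alt: "fmul p q w = (\<Sum>s\<in>Sp w. p (fst s) * q (snd s))"
proof -
  have inj: "inj_on (\<lambda>i. (take i w, drop i w)) {..length w}"
    by (rule inj_onI) (metis (no_types, lifting) Pair_inject atMost_iff length_take min.absorb2)
  show ?thesis unfolding fmul_def Sp_image sum.reindex[OF inj] by simp
qed

lemma fmul_assoc: "fmul (fmul p q) r = fmul p (fmul q r)" for p q r :: "'a list \<Rightarrow> 'k::comm_ring_1"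
proof
  fix w :: "'a list"
  let ?T = "{(a,b,c). a @ b @ c = w}"
  let ?g = "\<lambda>t. p (fst t) * q (fst (snd t)) * r (snd (snd t))"
  have "fmul (fmul p q) r w = (\<Sum>s\<in>Sp w. \<Sum>s'\<in>Sp (fst s). p (fst s') * q (snd s') * r (snd s))"
    by (simp add: fmul_alt sum_distrib_right)
  also have "\<dots> = (\<Sum>z\<in>Sigma (Sp w) (\<lambda>s. Sp (fst s)). p (fst (snd z)) * q (snd (snd z)) * r (snd (fst z)))"
    by (subst sum.Sigma) (auto simp: split_def)
  also have "\<dots> = sum ?g ?T"
    by (rule sum.reindex_bij_witness[where i="\<lambda>(a,b,c). ((a@b,c),(a,b))" and j="\<lambda>((x,c),(a,b)). (a,b,c)"])
       (auto simp: Sp_def)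
  finally have L: "fmul (fmul p q) r w = sum ?g ?T" .
  have "fmul p (fmul q r) w = (\<Sum>s\<in>Sp w. \<Sum>s'\<in>Sp (snd s). p (fst s) * (q (fst s') * r (snd s')))"
    by (simp add: fmul_alt sum_distrib_left)
  also have "\<dots> = (\<Sum>z\<in>Sigma (Sp w) (\<lambda>s. Sp (snd s)). p (fst (fst z)) * (q (fst (snd z)) * r (snd (snd z))))"
    by (subst sum.Sigma) (auto simp: split_def)
  also have "\<dots> = sum ?g ?T"
    by (rule sum.reindex_bij_witness[where i="\<lambda>(a,b,c). ((a,b@c),(b,c))" and j="\<lambda>((a,y),(b,c)). (a,b,c)"])
       (auto simp: Sp_def mult.assoc)
  finally show "fmul (fmul p q) r w = fmul p (fmul q r) w" using L by simp
qed

lemma fmul_word: "fmul (fword a) (fword b) = fword (a @ b)"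
proof
  fix w
  have "fmul (fword a) (fword b) w = (\<Sum>s\<in>Sp w. if s = (a,b) then 1 else 0)"
    unfolding fmul_alt by (intro sum.cong) (auto simp: fword_apply)
  also have "\<dots> = (if (a,b) \<in> Sp w then 1 else 0)" by (simp add: sum.delta)
  finally show "fmul (fword a) (fword b) w = fword (a @ b) w"
    by (auto simp: fword_apply Sp_def)
qed

lemma fmul_one_left[simp]: "fmul (fword []) p = p"
proof
  fix w
  have "fmul (fword []) p w = (\<Sum>s\<in>Sp w. if s = ([],w) then p w else 0)"
    unfolding fmul_alt by (intro sum.cong) (auto simp: fword_apply Sp_def)
  also have "\<dots> = (if ([],w) \<in> Sp w then p w else 0)" by (rule sum.delta[OF finite_Sp])
  finally show "fmul (fword []) p w = p w" by (simp add: Sp_def)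
qed

lemma fmul_one_right[simp]: "fmul p (fword []) = p"
proof
  fix w
  have "fmul p (fword []) w = (\<Sum>s\<in>Sp w. if s = (w,[]) then p w else 0)"
    unfolding fmul_alt by (intro sum.cong) (auto simp: fword_apply Sp_def)
  also have "\<dots> = (if (w,[]) \<in> Sp w then p w else 0)" by (rule sum.delta[OF finite_Sp])
  finally show "fmul p (fword []) w = p w" by (simp add: Sp_def)
qed

lemma fmul_add_left: "fmul (p + q) r = fmul p r + fmul q r"
  by (rule ext) (simp add: fmul_def distrib_right sum.distrib)
lemma fmul_add_right: "fmul r (p + q) = fmul r p + fmul r q"
  by (rule ext) (simp add: fmul_def distrib_left sum.distrib)
lemma fmul_diff_left: "fmul (p - q) r = fmul p r - fmul q r"
  by (rule ext) (simp add: fmul_def left_diff_distrib sum_subtractf)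
lemma fmul_diff_right: "fmul r (p - q) = fmul r p - fmul r q"
  by (rule ext) (simp add: fmul_def right_diff_distrib sum_subtractf)
lemma fmul_smult_left: "fmul (fsmult c p) r = fsmult c (fmul p r)"
  by (rule ext) (simp add: fmul_def sum_distrib_left mult.assoc)
lemma fmul_smult_right: "fmul r (fsmult c p) = fsmult c (fmul r p)"
  by (rule ext) (simp add: fmul_def sum_distrib_left mult.left_commute)
lemma fmul_zero_left[simp]: "fmul 0 r = 0"
  by (rule ext) (simp add: fmul_def)
lemma fmul_zero_right[simp]: "fmul r 0 = 0"
  by (rule ext) (simp add: fmul_def)
lemma fmul_sum_left: "fmul (\<Sum>i\<in>S. f i) r = (\<Sum>i\<in>S. fmul (f i) r)"
  by (rule ext) (simp add: fmul_def sum_fun_apply sum_distrib_right, rule sum.swap)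
lemma fmul_sum_right: "fmul r (\<Sum>i\<in>S. f i) = (\<Sum>i\<in>S. fmul r (f i))"
  by (rule ext) (simp add: fmul_def sum_fun_apply sum_distrib_left, rule sum.swap)

lemma fsmult_add: "fsmult c (p + q) = fsmult c p + fsmult c q"
  by (rule ext) (simp add: distrib_left)
lemma fsmult_sum: "fsmult c (\<Sum>i\<in>S. f i) = (\<Sum>i\<in>S. fsmult c (f i))"
  by (rule ext) (simp add: sum_fun_apply sum_distrib_left)
lemma fsmult_fsmult[simp]: "fsmult c (fsmult d p) = fsmult (c * d) p"
  by (rule ext) (simp add: mult.assoc)
lemma fsmult_one[simp]: "fsmult 1 p = p"
  by (rule ext) simp
lemma fsmult_zero[simp]: "fsmult 0 p = 0"
  by (rule ext) simp

lemma fmul_nonzero: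
  assumes "fmul p q w \<noteq> 0"
  shows "\<exists>a b. w = a @ b \<and> p a \<noteq> 0 \<and> q b \<noteq> 0"
proof (rule ccontr)
  assume "\<not> ?thesis"
  then have "\<forall>s\<in>Sp w. p (fst s) * q (snd s) = 0" by (clarsimp simp: Sp_def) (metis mult_zero_left mult_zero_right)
  then show False using assms by (simp add: fmul_alt)
qed


definition spt :: "('a list \<Rightarrow> 'k::zero) \<Rightarrow> 'a list set" where
  "spt p = {w. p w \<noteq> 0}"

lemma spt_iff[simp]: "w \<in> spt p \<longleftrightarrow> p w \<noteq> 0" by (simp add: spt_def)
lemma fsupp_spt: "fsupp p \<longleftrightarrow> finite (spt p)" by (simp add: fsupp_def spt_def)

lemma falg_iff: "p \<in> falg A \<longleftrightarrow> fsupp p \<and> (\<forall>w. p w \<noteq> 0 \<longrightarrow> set w \<subseteq> A)"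
  by (simp add: falg_def)

lemma spt_add: "spt (p + q) \<subseteq> spt p \<union> spt q" for p q :: "'a list \<Rightarrow> 'k::comm_ring_1" by auto
lemma spt_diff: "spt (p - q) \<subseteq> spt p \<union> spt q" for p q :: "'a list \<Rightarrow> 'k::comm_ring_1" by auto
lemma spt_smult: "spt (fsmult c p) \<subseteq> spt p" for p q :: "'a list \<Rightarrow> 'k::comm_ring_1" by auto
lemma spt_sum: "spt (\<Sum>i\<in>I. f i) \<subseteq> (\<Union>i\<in>I. spt (f i))" for f :: "'i \<Rightarrow> 'a list \<Rightarrow> 'k::comm_ring_1"
proof
  fix w assume "w \<in> spt (\<Sum>i\<in>I. f i)"
  then have "(\<Sum>i\<in>I. f i w) \<noteq> 0" by (simp add: sum_fun_apply)
  then obtain i where "i \<in> I" "f i w \<noteq> 0" by (meson sum.neutral)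
  then show "w \<in> (\<Union>i\<in>I. spt (f i))" by auto
qed
lemma spt_fword: "spt (fword w :: _ \<Rightarrow> 'k::comm_ring_1) = {w}" by (auto simp: fword_apply split: if_splits)
lemma spt_fmul: "spt (fmul p q) \<subseteq> (\<lambda>(a,b). a @ b) ` (spt p \<times> spt q)"
proof
  fix w assume "w \<in> spt (fmul p q)"
  then obtain a b where "w = a @ b" "p a \<noteq> 0" "q b \<noteq> 0" using fmul_nonzero[of p q w] by auto
  then show "w \<in> (\<lambda>(a,b). a @ b) ` (spt p \<times> spt q)" by (intro image_eqI[where x="(a,b)"]) auto
qed

lemma fsupp_add: "fsupp p \<Longrightarrow> fsupp q \<Longrightarrow> fsupp (p + q)" for p q :: "'a list \<Rightarrow> 'k::comm_ring_1"
  unfolding fsupp_spt by (rule finite_subset[OF spt_add]) simp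
lemma fsupp_diff: "fsupp p \<Longrightarrow> fsupp q \<Longrightarrow> fsupp (p - q)" for p q :: "'a list \<Rightarrow> 'k::comm_ring_1"
  unfolding fsupp_spt by (rule finite_subset[OF spt_diff]) simp
lemma fsupp_smult: "fsupp p \<Longrightarrow> fsupp (fsmult c p)" for p :: "'a list \<Rightarrow> 'k::comm_ring_1"
  unfolding fsupp_spt by (rule finite_subset[OF spt_smult])
lemma fsupp_sum:
  fixes f :: "'i \<Rightarrow> 'a list \<Rightarrow> 'k::comm_ring_1"
  assumes "finite I" "\<And>i. i \<in> I \<Longrightarrow> fsupp (f i)" shows "fsupp (\<Sum>i\<in>I. f i)"
proof -
  have "finite (\<Union>i\<in>I. spt (f i))" using assms by (auto simp: fsupp_spt)
  then show ?thesis unfolding fsupp_spt by (rule finite_subset[OF spt_sum])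
qed
lemma fsupp_fword: "fsupp (fword w :: _ \<Rightarrow> 'k::comm_ring_1)"
  unfolding fsupp_spt spt_fword by simp
lemma fsupp_zero: "fsupp 0" unfolding fsupp_def by simp
lemma fsupp_fmul: "fsupp p \<Longrightarrow> fsupp q \<Longrightarrow> fsupp (fmul p q)" for p q :: "'a list \<Rightarrow> 'k::comm_ring_1"
  unfolding fsupp_spt by (rule finite_subset[OF spt_fmul]) simp

lemma falg_add:
  fixes p q :: "'a list \<Rightarrow> 'k::comm_ring_1"
  assumes "p \<in> falg A" "q \<in> falg A" shows "p + q \<in> falg A"
  unfolding falg_iff
proof (intro conjI allI impI)
  show "fsupp (p + q)" using assms by (intro fsupp_add) (auto simp: falg_iff)
  fix w assume "(p + q) w \<noteq> 0"
  then have "p w \<noteq> 0 \<or> q w \<noteq> 0" by auto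
  then show "set w \<subseteq> A" using assms by (auto simp: falg_iff)
qed
lemma falg_diff:
  fixes p q :: "'a list \<Rightarrow> 'k::comm_ring_1"
  assumes "p \<in> falg A" "q \<in> falg A" shows "p - q \<in> falg A"
  unfolding falg_iff
proof (intro conjI allI impI)
  show "fsupp (p - q)" using assms by (intro fsupp_diff) (auto simp: falg_iff)
  fix w assume "(p - q) w \<noteq> 0"
  then have "p w \<noteq> 0 \<or> q w \<noteq> 0" by auto
  then show "set w \<subseteq> A" using assms by (auto simp: falg_iff)
qed
lemma falg_smult:
  assumes "p \<in> falg A" shows "fsmult c p \<in> falg A"
  unfolding falg_iff
proof (intro conjI allI impI)
  show "fsupp (fsmult c p)" using assms by (intro fsupp_smult) (auto simp: falg_iff)
  fix w assume "fsmult c p w \<noteq> 0"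
  then have "p w \<noteq> 0" by auto
  then show "set w \<subseteq> A" using assms by (auto simp: falg_iff)
qed
lemma falg_zero: "0 \<in> falg A" unfolding falg_iff using fsupp_zero by simp
lemma falg_fword:
  assumes "set w \<subseteq> A" shows "(fword w :: _ \<Rightarrow> 'k::comm_ring_1) \<in> falg A"
  unfolding falg_iff
proof (intro conjI allI impI)
  show "fsupp (fword w :: _ \<Rightarrow> 'k)" by (rule fsupp_fword)
  fix v assume "(fword w :: _ \<Rightarrow> 'k) v \<noteq> 0"
  then have "v = w" by (simp add: fword_apply split: if_splits)
  then show "set v \<subseteq> A" using assms by simp
qed
lemma falg_sum:
  fixes f :: "'i \<Rightarrow> 'a list \<Rightarrow> 'k::comm_ring_1"
  shows "finite I \<Longrightarrow> (\<And>i. i \<in> I \<Longrightarrow> f i \<in> falg A) \<Longrightarrow> (\<Sum>i\<in>I. f i) \<in> falg A"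
  by (induction I rule: finite_induct) (auto simp: falg_zero falg_add)
lemma falg_fmul:
  assumes "p \<in> falg A" "q \<in> falg A" shows "fmul p q \<in> falg A"
  unfolding falg_iff
proof (intro conjI allI impI)
  show "fsupp (fmul p q)" using assms by (intro fsupp_fmul) (auto simp: falg_iff)
  fix w assume "fmul p q w \<noteq> 0"
  then obtain a b where "w = a @ b" "p a \<noteq> 0" "q b \<noteq> 0" using fmul_nonzero[of p q w] by auto
  then show "set w \<subseteq> A" using assms by (auto simp: falg_iff)
qed
lemma falg_fsupp: "p \<in> falg A \<Longrightarrow> fsupp p" by (simp add: falg_iff)
lemma falg_UNIV: "p \<in> falg UNIV \<longleftrightarrow> fsupp p" by (simp add: falg_iff)

lemma decomp_superset:
  assumes "finite S" "spt p \<subseteq> S"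
  shows "p = (\<Sum>w\<in>S. fsmult (p w) (fword w))"
proof
  fix v
  have "(\<Sum>w\<in>S. fsmult (p w) (fword w)) v = (\<Sum>w\<in>S. if v = w then p w else 0)"
    by (simp add: sum_fun_apply fword_apply if_distrib cong: if_cong)
  also have "\<dots> = (if v \<in> S then p v else 0)" using assms(1) by (simp add: sum.delta)
  also have "\<dots> = p v" using assms(2) by auto
  finally show "p v = (\<Sum>w\<in>S. fsmult (p w) (fword w)) v" by simp
qed

lemma decomp: "fsupp p \<Longrightarrow> p = (\<Sum>w\<in>spt p. fsmult (p w) (fword w))"
  by (rule decomp_superset) (auto simp: fsupp_spt)

lemma fsubst_superset:
  assumes "finite S" "spt p \<subseteq> S"
  shows "fsubst f p = (\<Sum>w\<in>S. fsmult (p w) (fmono f w))"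
  unfolding fsubst_def
  by (rule sum.mono_neutral_left) (use assms in auto)

lemma fsubst_alt: "fsubst f p = (\<Sum>w\<in>spt p. fsmult (p w) (fmono f w))"
  by (simp add: fsubst_def spt_def)

lemma fsmult_add_left: "fsmult (a + b) p = fsmult a p + fsmult b p"
  by (rule ext) (simp add: distrib_right)
lemma fsmult_diff_left: "fsmult (a - b) p = fsmult a p - fsmult b p"
  by (rule ext) (simp add: left_diff_distrib)

lemma fsubst_add:
  assumes "fsupp p" "fsupp q"
  shows "fsubst f (p + q) = fsubst f p + fsubst f q"
proof -
  let ?S = "spt p \<union> spt q"
  have fin: "finite ?S" using assms by (simp add: fsupp_spt)
  have "fsubst f (p + q) = (\<Sum>w\<in>?S. fsmult ((p + q) w) (fmono f w))"
    by (rule fsubst_superset[OF fin]) auto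
  also have "\<dots> = (\<Sum>w\<in>?S. fsmult (p w) (fmono f w)) + (\<Sum>w\<in>?S. fsmult (q w) (fmono f w))"
    by (simp add: fsmult_add_left sum.distrib)
  also have "\<dots> = fsubst f p + fsubst f q"
    by (simp add: fsubst_superset[OF fin])
  finally show ?thesis .
qed

lemma fsubst_diff:
  assumes "fsupp p" "fsupp q"
  shows "fsubst f (p - q) = fsubst f p - fsubst f q"
proof -
  let ?S = "spt p \<union> spt q"
  have fin: "finite ?S" using assms by (simp add: fsupp_spt)
  have "fsubst f (p - q) = (\<Sum>w\<in>?S. fsmult ((p - q) w) (fmono f w))"
    by (rule fsubst_superset[OF fin]) auto
  also have "\<dots> = (\<Sum>w\<in>?S. fsmult (p w) (fmono f w)) - (\<Sum>w\<in>?S. fsmult (q w) (fmono f w))"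
    by (simp add: fsmult_diff_left sum_subtractf)
  also have "\<dots> = fsubst f p - fsubst f q"
    by (simp add: fsubst_superset[OF fin])
  finally show ?thesis .
qed

lemma fsubst_smult:
  assumes "fsupp p"
  shows "fsubst f (fsmult c p) = fsmult c (fsubst f p)"
proof -
  have fin: "finite (spt p)" using assms by (simp add: fsupp_spt)
  have "fsubst f (fsmult c p) = (\<Sum>w\<in>spt p. fsmult (c * p w) (fmono f w))"
    by (subst fsubst_superset[OF fin]) auto
  also have "\<dots> = fsmult c (fsubst f p)"
    by (simp add: fsubst_superset[OF fin] fsmult_sum)
  finally show ?thesis .
qed

lemma fsubst_zero: "fsubst f 0 = 0"
  by (simp add: fsubst_def)

lemma fsubst_sum:
  fixes g :: "'i \<Rightarrow> 'a list \<Rightarrow> 'k::comm_ring_1"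
  assumes "finite I" "\<And>i. i \<in> I \<Longrightarrow> fsupp (g i)"
  shows "fsubst f (\<Sum>i\<in>I. g i) = (\<Sum>i\<in>I. fsubst f (g i))"
  using assms
proof (induction I rule: finite_induct)
  case empty then show ?case by (simp only: sum.empty fsubst_zero)
next
  case (insert x F)
  have "fsubst f (\<Sum>i\<in>insert x F. g i) = fsubst f (g x + (\<Sum>i\<in>F. g i))"
    by (simp only: sum.insert[OF insert(1,2)])
  also have "\<dots> = fsubst f (g x) + fsubst f (\<Sum>i\<in>F. g i)"
    by (rule fsubst_add) (use insert.prems insert.hyps in \<open>auto intro: fsupp_sum\<close>)
  also have "\<dots> = (\<Sum>i\<in>insert x F. fsubst f (g i))"
    using insert.IH insert.prems by (simp only: sum.insert[OF insert(1,2)]) simp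
  finally show ?case .
qed

lemma fsubst_fword: "fsubst f (fword w) = fmono f w"
proof -
  have "fsubst f (fword w) = (\<Sum>v\<in>{w}. fsmult (fword w v) (fmono f v))"
    by (rule fsubst_superset) (auto simp: fword_apply split: if_splits)
  then show ?thesis by (simp add: fword_apply)
qed

lemma fmono_Nil[simp]: "fmono f [] = fword []" by (simp add: fmono_def)
lemma fmono_Cons[simp]: "fmono f (a # w) = fmul (f a) (fmono f w)" by (simp add: fmono_def)
lemma fmono_append: "fmono f (x @ y) = fmul (fmono f x) (fmono f y)"
  by (induction x) (simp_all add: fmul_assoc)

lemma fsubst_smult_word: "fsubst f (fsmult c (fword w)) = fsmult c (fmono f w)"
  by (simp add: fsubst_smult fsupp_fword fsubst_fword)

lemma fmul_decomp:
  assumes "fsupp p" "fsupp q"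
  shows "fmul p q = (\<Sum>x\<in>spt p. \<Sum>y\<in>spt q. fsmult (p x * q y) (fword (x @ y)))"
proof -
  have "fmul p q = fmul (\<Sum>x\<in>spt p. fsmult (p x) (fword x)) (\<Sum>y\<in>spt q. fsmult (q y) (fword y))"
    using decomp[OF assms(1)] decomp[OF assms(2)] by simp
  also have "\<dots> = (\<Sum>x\<in>spt p. \<Sum>y\<in>spt q. fsmult (p x * q y) (fword (x @ y)))"
    by (simp add: fmul_sum_left fmul_sum_right fmul_smult_left fmul_smult_right fmul_word fsmult_sum mult.commute, rule sum.swap)
  finally show ?thesis .
qed

lemma fsubst_fmul:
  assumes "fsupp p" "fsupp q"
  shows "fsubst f (fmul p q) = fmul (fsubst f p) (fsubst f q)"
proof -
  have fp: "finite (spt p)" and fq: "finite (spt q)" using assms by (simp_all add: fsupp_spt)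
  have "fsubst f (fmul p q) = (\<Sum>x\<in>spt p. \<Sum>y\<in>spt q. fsmult (p x * q y) (fmono f (x @ y)))"
    unfolding fmul_decomp[OF assms]
    by (simp add: fsubst_sum fp fq fsupp_sum fsupp_smult fsupp_fword fsubst_smult_word)
  also have "\<dots> = fmul (\<Sum>x\<in>spt p. fsmult (p x) (fmono f x)) (\<Sum>y\<in>spt q. fsmult (q y) (fmono f y))"
    by (simp add: fmul_sum_left fmul_sum_right fmul_smult_left fmul_smult_right fmono_append fsmult_sum mult.commute, rule sum.swap)
  also have "\<dots> = fmul (fsubst f p) (fsubst f q)" by (simp add: fsubst_alt)
  finally show ?thesis .
qed

lemma fideal_falg:
  assumes "R \<subseteq> falg A" "x \<in> fideal A R"
  shows "x \<in> falg A"
  using assms(2)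
proof induction
  case zero show ?case by (rule falg_zero)
next
  case (add a b) from add.IH show ?case by (rule falg_add)
qed (use assms(1) falg_fmul in auto)

lemma fideal_smult:
  assumes "a \<in> fideal A R"
  shows "fsmult c a \<in> fideal A R"
proof -
  have "fmul (fsmult c (fword [])) a \<in> fideal A R"
    by (rule fideal.lmul[OF assms]) (simp add: falg_smult falg_fword)
  then show ?thesis by (simp add: fmul_smult_left)
qed

lemma fideal_diff:
  assumes "a \<in> fideal A R" "b \<in> fideal A R"
  shows "a - b \<in> fideal A R"
proof -
  have "a + fsmult (-1) b \<in> fideal A R"
    by (rule fideal.add[OF assms(1) fideal_smult[OF assms(2)]])
  moreover have "a + fsmult (-1) b = a - b" by (rule ext) simp
  ultimately show ?thesis by simp
qed

lemma fideal_sum: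
  "finite I \<Longrightarrow> (\<And>i. i \<in> I \<Longrightarrow> g i \<in> fideal A R) \<Longrightarrow> (\<Sum>i\<in>I. g i) \<in> fideal A R"
  by (induction I rule: finite_induct) (auto intro: fideal.zero fideal.add)

lemma fideal_sandwich:
  assumes "r \<in> fideal A R" "set pre \<subseteq> A" "set suf \<subseteq> A"
  shows "fmul (fword pre) (fmul r (fword suf)) \<in> fideal A R"
  by (intro fideal.lmul fideal.rmul assms falg_fword)


fun Nval :: "('a \<Rightarrow> nat) \<Rightarrow> nat \<Rightarrow> 'a list \<Rightarrow> nat" where
  "Nval code B [] = 0"
| "Nval code B (x # w) = code x * B ^ length w + Nval code B w"

lemma Nval_bound: "(\<forall>x\<in>set w. code x < B) \<Longrightarrow> Nval code B w < B ^ length w"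
proof (induction w)
  case Nil then show ?case by simp
next
  case (Cons x w)
  then have "code x + 1 \<le> B" "Nval code B w < B ^ length w" by auto
  then have "code x * B ^ length w + Nval code B w < (code x + 1) * B ^ length w" by simp
  also have "\<dots> \<le> B * B ^ length w" using \<open>code x + 1 \<le> B\<close> by (intro mult_right_mono) auto
  finally show ?case by simp
qed

lemma Nval_append: "Nval code B (u @ v) = Nval code B u * B ^ length v + Nval code B v"
  by (induction u) (simp_all add: power_add algebra_simps)

lemma Nval_less:
  assumes "code c < code a" "code d < B" "\<forall>x\<in>set suf. code x < B"
  shows "Nval code B (pre @ c # d # suf) < Nval code B (pre @ a # b # suf)"
proof -
  let ?L = "length suf"
  have s: "Nval code B suf < B ^ ?L" using Nval_bound assms(3) by blast
  have "code d * B ^ ?L + Nval code B suf < (code d + 1) * B ^ ?L" using s by simp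
  also have "\<dots> \<le> B * B ^ ?L" using assms(2) by (intro mult_right_mono) auto
  finally have 1: "code d * B ^ ?L + Nval code B suf < B ^ Suc ?L" by simp
  have "Nval code B (c # d # suf) = code c * B ^ Suc ?L + (code d * B ^ ?L + Nval code B suf)" by simp
  also have "\<dots> < (code c + 1) * B ^ Suc ?L" using 1 by simp
  also have "\<dots> \<le> code a * B ^ Suc ?L" using assms(1) by (intro mult_right_mono) auto
  also have "\<dots> \<le> Nval code B (a # b # suf)" by simp
  finally have "Nval code B (c # d # suf) < Nval code B (a # b # suf)" .
  then show ?thesis by (simp add: Nval_append)
qed

lemma not_successively_split:
  "\<not> successively P w \<Longrightarrow> \<exists>pre a b suf. w = pre @ a # b # suf \<and> \<not> P a b"
proof (induction w)
  case Nil then show ?case by simp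
next
  case (Cons x w)
  show ?case
  proof (cases w)
    case Nil then show ?thesis using Cons.prems by simp
  next
    case (Cons y ys)
    show ?thesis
    proof (cases "P x y")
      case True
      then have "\<not> successively P w" using Cons.prems \<open>w = y # ys\<close> by simp
      then obtain pre a b suf where "w = pre @ a # b # suf" "\<not> P a b" using Cons.IH by blast
      then show ?thesis by (metis append_Cons)
    next
      case False then show ?thesis using \<open>w = y # ys\<close> by (metis append_Nil)
    qed
  qed
qed

lemma fsmult_neg1: "fsmult (-1) p = - p" by (rule ext) simp

lemma fsmult_diff: "fsmult c (p - q) = fsmult c p - fsmult c q"
  by (rule ext) (simp add: right_diff_distrib)

lemma sandwich_expand:
  fixes r :: "'a list \<Rightarrow> 'k::comm_ring_1"
  assumes "fsupp r"
  shows "fmul (fword pre) (fmul r (fword suf)) = (\<Sum>v\<in>spt r. fsmult (r v) (fword (pre @ v @ suf)))"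
proof -
  have "fmul (fword pre) (fmul r (fword suf)) =
        fmul (fword pre) (fmul (\<Sum>v\<in>spt r. fsmult (r v) (fword v)) (fword suf))"
    using decomp[OF assms] by simp
  also have "\<dots> = (\<Sum>v\<in>spt r. fsmult (r v) (fword (pre @ v @ suf)))"
    by (simp add: fmul_sum_left fmul_sum_right fmul_smult_left fmul_smult_right fmul_word)
  finally show ?thesis .
qed

lemma rewrite_word:
  fixes R :: "('a list \<Rightarrow> 'k::comm_ring_1) set" and code :: "'a \<Rightarrow> nat" and B :: nat
  assumes RA: "R \<subseteq> falg A"
    and codeB: "\<forall>x\<in>A. code x < B"
    and red: "\<forall>a\<in>A. \<forall>b\<in>A. \<not> P a b \<longrightarrow> (\<exists>r \<in> fideal A R. r [a,b] = 1 \<and>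
               (\<forall>v. r v \<noteq> 0 \<longrightarrow> v = [a,b] \<or> (\<exists>c d. v = [c,d] \<and> c \<in> A \<and> d \<in> A \<and> code c < code a)))"
  shows "set w \<subseteq> A \<Longrightarrow> \<exists>p'. p' \<in> falg A \<and> (\<forall>v. p' v \<noteq> 0 \<longrightarrow> successively P v \<and> length v = length w)
                              \<and> fword w - p' \<in> fideal A R"
proof (induction "Nval code B w" arbitrary: w rule: less_induct)
  case less
  show ?case
  proof (cases "successively P w")
    case True
    show ?thesis
    proof (intro exI conjI allI impI)
      show "fword w \<in> falg A" using less.prems by (rule falg_fword)
      fix v assume "(fword w :: 'a list \<Rightarrow> 'k) v \<noteq> 0"
      then have "v = w" by (simp add: fword_apply split: if_splits)
      then show "successively P v" "length v = length w" using True by auto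
    next
      show "fword w - fword w \<in> fideal A R" by (simp add: fideal.zero)
    qed
  next
    case False
    then obtain pre a b suf where w: "w = pre @ a # b # suf" and nP: "\<not> P a b"
      using not_successively_split by blast
    have A: "a \<in> A" "b \<in> A" "set pre \<subseteq> A" "set suf \<subseteq> A" using less.prems w by auto
    obtain r where rI: "r \<in> fideal A R" and r1: "r [a,b] = 1"
      and rs: "\<And>v. r v \<noteq> 0 \<Longrightarrow> v = [a,b] \<or> (\<exists>c d. v = [c,d] \<and> c \<in> A \<and> d \<in> A \<and> code c < code a)"
      using red A nP by blast
    have rA: "r \<in> falg A" using fideal_falg[OF RA rI] .
    then have finr: "finite (spt r)" by (simp add: falg_iff fsupp_spt)
    define S' where "S' = spt r - {[a,b]}"
    have finS: "finite S'" using finr by (simp add: S'_def)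
    have S'form: "\<And>v. v \<in> S' \<Longrightarrow> \<exists>c d. v = [c,d] \<and> c \<in> A \<and> d \<in> A \<and> code c < code a"
      using rs by (auto simp: S'_def)
    have IHv: "\<forall>v\<in>S'. \<exists>p'. p' \<in> falg A \<and> (\<forall>u. p' u \<noteq> 0 \<longrightarrow> successively P u \<and> length u = length (pre @ v @ suf))
                              \<and> fword (pre @ v @ suf) - p' \<in> fideal A R"
    proof
      fix v assume "v \<in> S'"
      then obtain c d where v: "v = [c,d]" "c \<in> A" "d \<in> A" "code c < code a" using S'form by blast
      have "Nval code B (pre @ c # d # suf) < Nval code B (pre @ a # b # suf)"
        using v A codeB by (intro Nval_less) auto
      then have lt: "Nval code B (pre @ v @ suf) < Nval code B w" using v w by simp
      have st: "set (pre @ v @ suf) \<subseteq> A" using v A by auto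
      show "\<exists>p'. p' \<in> falg A \<and> (\<forall>u. p' u \<noteq> 0 \<longrightarrow> successively P u \<and> length u = length (pre @ v @ suf))
                              \<and> fword (pre @ v @ suf) - p' \<in> fideal A R"
        by (rule less.hyps[OF lt st])
    qed
    from bchoice[OF IHv] obtain g where g0: "\<forall>v\<in>S'. g v \<in> falg A \<and> (\<forall>u. g v u \<noteq> 0 \<longrightarrow> successively P u \<and> length u = length (pre @ v @ suf))
                              \<and> fword (pre @ v @ suf) - g v \<in> fideal A R" ..
    note g = bspec[OF g0]
    have lenv: "\<And>v. v \<in> S' \<Longrightarrow> length (pre @ v @ suf) = length w"
      using S'form w by fastforce
    define Y where "Y = (\<Sum>v\<in>S'. fsmult (r v) (g v))"
    define X where "X = (\<Sum>v\<in>S'. fsmult (r v) (fword (pre @ v @ suf)))"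
    have sand: "fmul (fword pre) (fmul r (fword suf)) = fword w + X"
    proof -
      have "[a,b] \<in> spt r" using r1 by simp
      then have "fmul (fword pre) (fmul r (fword suf)) = fsmult (r [a,b]) (fword (pre @ [a,b] @ suf)) + X"
        unfolding sandwich_expand[OF falg_fsupp[OF rA]] X_def S'_def
        by (simp add: sum.remove[OF finr])
      then show ?thesis using r1 w by simp
    qed
    have eq: "fword w - fsmult (-1) Y = fmul (fword pre) (fmul r (fword suf)) - (\<Sum>v\<in>S'. fsmult (r v) (fword (pre @ v @ suf) - g v))"
      unfolding sand fsmult_neg1 by (simp add: fsmult_diff sum_subtractf X_def Y_def)
    show ?thesis
    proof (intro exI conjI allI impI)
      show "fsmult (-1) Y \<in> falg A" unfolding Y_def
        by (intro falg_smult falg_sum finS) (use g in auto)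
      have "(\<Sum>v\<in>S'. fsmult (r v) (fword (pre @ v @ suf) - g v)) \<in> fideal A R"
        by (intro fideal_sum finS fideal_smult) (use g in auto)
      then show "fword w - fsmult (-1) Y \<in> fideal A R" unfolding eq
        by (intro fideal_diff fideal_sandwich rI A)
    next
      fix u assume "fsmult (-1) Y u \<noteq> 0"
      then have "Y u \<noteq> 0" by simp
      then obtain v where "v \<in> S'" "g v u \<noteq> 0" unfolding Y_def sum_fun_apply
        by (metis (mono_tags, lifting) fsmult_apply mult_zero_right sum.neutral)
      then show "successively P u" "length u = length w" using g lenv by auto
    qed
  qed
qed

lemma rewrite_all:
  fixes R :: "('a list \<Rightarrow> 'k::comm_ring_1) set" and code :: "'a \<Rightarrow> nat" and B :: nat
  assumes RA: "R \<subseteq> falg A"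
    and codeB: "\<forall>x\<in>A. code x < B"
    and red: "\<forall>a\<in>A. \<forall>b\<in>A. \<not> P a b \<longrightarrow> (\<exists>r \<in> fideal A R. r [a,b] = 1 \<and>
               (\<forall>v. r v \<noteq> 0 \<longrightarrow> v = [a,b] \<or> (\<exists>c d. v = [c,d] \<and> c \<in> A \<and> d \<in> A \<and> code c < code a)))"
    and pA: "p \<in> falg A"
  shows "\<exists>p'. p' \<in> falg A \<and> (\<forall>v. p' v \<noteq> 0 \<longrightarrow> successively P v \<and> (\<exists>u. p u \<noteq> 0 \<and> length u = length v))
                              \<and> p - p' \<in> fideal A R"
proof -
  have finp: "finite (spt p)" using pA by (simp add: falg_iff fsupp_spt)
  have "\<forall>u\<in>spt p. \<exists>p'. p' \<in> falg A \<and> (\<forall>v. p' v \<noteq> 0 \<longrightarrow> successively P v \<and> length v = length u)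
                              \<and> fword u - p' \<in> fideal A R"
  proof
    fix u assume "u \<in> spt p"
    then have "set u \<subseteq> A" using pA by (auto simp: falg_iff)
    then show "\<exists>p'. p' \<in> falg A \<and> (\<forall>v. p' v \<noteq> 0 \<longrightarrow> successively P v \<and> length v = length u)
                              \<and> fword u - p' \<in> fideal A R"
      by (rule rewrite_word[OF RA codeB red])
  qed
  from bchoice[OF this] obtain g where g0: "\<forall>u\<in>spt p. g u \<in> falg A \<and> (\<forall>v. g u v \<noteq> 0 \<longrightarrow> successively P v \<and> length v = length u)
                              \<and> fword u - g u \<in> fideal A R" ..
  note g = bspec[OF g0]
  define p' where "p' = (\<Sum>u\<in>spt p. fsmult (p u) (g u))"
  have eq: "p - p' = (\<Sum>u\<in>spt p. fsmult (p u) (fword u - g u))"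
    unfolding p'_def
    by (subst decomp[OF falg_fsupp[OF pA]]) (simp add: fsmult_diff sum_subtractf)
  show ?thesis
  proof (intro exI[of _ p'] conjI allI impI)
    show "p' \<in> falg A" unfolding p'_def
      by (intro falg_smult falg_sum finp) (use g in auto)
    show "p - p' \<in> fideal A R" unfolding eq
      by (intro fideal_sum finp fideal_smult) (use g in auto)
  next
    fix v assume "p' v \<noteq> 0"
    then obtain u where "u \<in> spt p" "g u v \<noteq> 0" unfolding p'_def sum_fun_apply
      by (metis (mono_tags, lifting) fsmult_apply mult_zero_right sum.neutral)
    then show "successively P v" "\<exists>u. p u \<noteq> 0 \<and> length u = length v" using g by auto
  qed
qed


lemma UNIV_uv: "(UNIV :: uv set) = {U, V}"
  using uv.exhaust by auto

lemma finite_len: "finite {w :: uv list. length w = d}"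
proof -
  have "finite {w :: uv list. set w \<subseteq> {U,V} \<and> length w = d}"
    by (rule finite_lists_length_eq) simp
  moreover have "{w :: uv list. set w \<subseteq> {U,V} \<and> length w = d} = {w. length w = d}"
    using UNIV_uv by auto
  ultimately show ?thesis by simp
qed

fun evw :: "uv list \<Rightarrow> 'k::comm_ring_1 \<Rightarrow> 'k" where
  "evw [] e = 1"
| "evw (U # w) e = evw w e"
| "evw (V # w) e = (e + of_nat (length w)) * evw w e"

lemma evw_append: "evw (x @ y) e = evw x (e + of_nat (length y)) * evw y e"
proof (induction x)
  case (Cons a x) then show ?case by (cases a) (simp_all add: algebra_simps)
qed simp

definition Em :: "(uv list \<Rightarrow> 'k::comm_ring_1) \<Rightarrow> 'k \<Rightarrow> nat \<Rightarrow> 'k" where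
  "Em q e d = (\<Sum>w\<in>{w. length w = d}. q w * evw w e)"

lemma Em_add: "Em (p + q) e d = Em p e d + Em q e d"
  by (simp add: Em_def distrib_right sum.distrib)
lemma Em_diff: "Em (p - q) e d = Em p e d - Em q e d"
  by (simp add: Em_def left_diff_distrib sum_subtractf)
lemma Em_smult: "Em (fsmult c p) e d = c * Em p e d"
  by (simp add: Em_def sum_distrib_left mult.assoc)
lemma Em_sum: "Em (\<Sum>i\<in>I. f i) e d = (\<Sum>i\<in>I. Em (f i) e d)"
  by (simp add: Em_def sum_fun_apply sum_distrib_right, rule sum.swap)
lemma Em_zero: "Em 0 e d = 0"
  by (simp add: Em_def)
lemma Em_fword: "Em (fword w) e d = (if length w = d then evw w e else 0)"
proof -
  have "Em (fword w) e d = (\<Sum>v\<in>{w. length w = d}. if v = w then evw w e else 0)"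
    unfolding Em_def by (intro sum.cong) (auto simp: fword_apply)
  also have "\<dots> = (if length w = d then evw w e else 0)"
    by (simp add: sum.delta[OF finite_len])
  finally show ?thesis .
qed

lemma Em_fmul:
  "Em (fmul p q) e d = (\<Sum>j\<le>d. Em p (e + of_nat j) (d - j) * Em q e j)"
proof -
  let ?L = "\<lambda>d. {w :: uv list. length w = d}"
  let ?P = "{(s,t). length s + length t = d} :: (uv list \<times> uv list) set"
  let ?h = "\<lambda>z. p (fst z) * q (snd z) * (evw (fst z) (e + of_nat (length (snd z))) * evw (snd z) e)"
  have "Em (fmul p q) e d = (\<Sum>w\<in>?L d. \<Sum>s\<in>Sp w. p (fst s) * q (snd s) * evw w e)"
    by (simp add: Em_def fmul_alt sum_distrib_right)
  also have "\<dots> = (\<Sum>w\<in>?L d. \<Sum>s\<in>Sp w. ?h s)"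
    by (intro sum.cong refl) (auto simp: Sp_def evw_append)
  also have "\<dots> = (\<Sum>z\<in>Sigma (?L d) Sp. ?h (snd z))"
    by (subst sum.Sigma) (auto simp: finite_len split_def)
  also have "\<dots> = sum ?h ?P"
    by (rule sum.reindex_bij_witness[where i="\<lambda>(s,t). (s @ t, (s,t))" and j="\<lambda>(w,(s,t)). (s,t)"])
       (auto simp: Sp_def)
  finally have L: "Em (fmul p q) e d = sum ?h ?P" .
  have "(\<Sum>j\<le>d. Em p (e + of_nat j) (d - j) * Em q e j)
      = (\<Sum>j\<le>d. \<Sum>s\<in>?L (d - j). \<Sum>t\<in>?L j. p s * evw s (e + of_nat j) * (q t * evw t e))"
    by (simp add: Em_def sum_product)
  also have "\<dots> = (\<Sum>j\<le>d. \<Sum>z\<in>?L (d - j) \<times> ?L j. p (fst z) * evw (fst z) (e + of_nat j) * (q (snd z) * evw (snd z) e))"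
    by (intro sum.cong refl) (simp add: sum.cartesian_product split_def)
  also have "\<dots> = (\<Sum>y\<in>Sigma {..d} (\<lambda>j. ?L (d - j) \<times> ?L j). p (fst (snd y)) * evw (fst (snd y)) (e + of_nat (fst y)) * (q (snd (snd y)) * evw (snd (snd y)) e))"
    by (subst sum.Sigma) (auto simp: finite_len split_def)
  also have "\<dots> = sum ?h ?P"
    by (rule sum.reindex_bij_witness[where i="\<lambda>(s,t). (length t, (s,t))" and j="\<lambda>(j,(s,t)). (s,t)"])
       (auto simp: algebra_simps)
  finally show ?thesis using L by simp
qed

lemma Em_kill:
  assumes "q \<in> jordan_ideal"
  shows "Em q e d = 0"
proof -
  have "q \<in> fideal UNIV {jordan_rel}" using assms by (simp add: jordan_ideal_def)
  then have "\<forall>e d. Em q e d = 0"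
  proof induction
    case (gen r)
    then have r: "r = jordan_rel" by simp
    show ?case
    proof (intro allI)
      fix e :: 'a and d
      show "Em r e d = 0"
        unfolding r jordan_rel_def by (simp add: Em_diff Em_fword)
    qed
  next
    case zero then show ?case by (simp add: Em_def)
  next
    case (add a b)
    have "(\<lambda>c. a c + b c) = a + b" by (simp add: plus_fun_def)
    then show ?case using add.IH by (simp add: Em_add)
  next
    case (lmul a c) then show ?case by (simp add: Em_fmul)
  next
    case (rmul a c) then show ?case by (simp add: Em_fmul)
  qed
  then show ?thesis by simp
qed


definition uvw :: "nat \<Rightarrow> nat \<Rightarrow> uv list" where
  "uvw a b = replicate a U @ replicate b V"

definition jP :: "uv \<Rightarrow> uv \<Rightarrow> bool" where
  "jP x y \<longleftrightarrow> \<not> (x = V \<and> y = U)"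

fun ucode :: "uv \<Rightarrow> nat" where
  "ucode U = 0"
| "ucode V = 1"

lemma jnormal_form: "successively jP w \<Longrightarrow> \<exists>a b. w = uvw a b"
proof (induction w)
  case Nil have "[] = uvw 0 0" by (simp add: uvw_def)
  then show ?case by blast
next
  case (Cons x w)
  then have "successively jP w" by (auto simp: successively_Cons)
  then obtain a b where w: "w = uvw a b" using Cons.IH by blast
  show ?case
  proof (cases x)
    case U then show ?thesis using w by (intro exI[of _ "Suc a"] exI[of _ b]) (simp add: uvw_def)
  next
    case V
    show ?thesis
    proof (cases a)
      case 0 then show ?thesis using w V by (intro exI[of _ 0] exI[of _ "Suc b"]) (simp add: uvw_def)
    next
      case (Suc a')
      then have "w = U # uvw a' b" using w by (simp add: uvw_def)
      then show ?thesis using Cons.prems V by (simp add: jP_def)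
    qed
  qed
qed

lemma evw_rep_U: "evw (replicate a U @ z) e = evw z e"
  by (induction a) simp_all

lemma evw_rep_V: "evw (replicate b V) e = pochhammer e b"
  by (induction b) (simp_all add: pochhammer_Suc mult.commute)

lemma evw_uvw: "evw (uvw a b) e = pochhammer e b"
  by (simp add: uvw_def evw_rep_U evw_rep_V)

lemma uvw_inj: "uvw a b = uvw a' b' \<Longrightarrow> a = a' \<and> b = b'"
proof -
  assume eq: "uvw a b = uvw a' b'"
  have "length (filter (\<lambda>x. x = V) (uvw a b)) = b" for a b
    by (simp add: uvw_def filter_replicate)
  then have "b = b'" using eq by metis
  moreover have "a + b = a' + b'" using arg_cong[OF eq, of length] by (simp add: uvw_def)
  ultimately show ?thesis by simp
qed

lemma length_uvw[simp]: "length (uvw a b) = a + b" by (simp add: uvw_def)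

lemma jordan_rel_falg: "(jordan_rel :: uv list \<Rightarrow> 'k::comm_ring_1) \<in> falg UNIV"
  unfolding jordan_rel_def by (intro falg_diff falg_fword) auto

lemma jordan_rewrite:
  fixes q :: "uv list \<Rightarrow> 'k::comm_ring_1"
  assumes "q \<in> falg UNIV"
  shows "\<exists>q'. q' \<in> falg UNIV \<and> (\<forall>v. q' v \<noteq> 0 \<longrightarrow> successively jP v \<and> (\<exists>u. q u \<noteq> 0 \<and> length u = length v))
                \<and> q - q' \<in> jordan_ideal"
proof -
  have red: "\<forall>a\<in>UNIV. \<forall>b\<in>UNIV. \<not> jP a b \<longrightarrow> (\<exists>r \<in> fideal UNIV {jordan_rel :: uv list \<Rightarrow> 'k}. r [a,b] = 1 \<and>
               (\<forall>v. r v \<noteq> 0 \<longrightarrow> v = [a,b] \<or> (\<exists>c d. v = [c,d] \<and> c \<in> UNIV \<and> d \<in> UNIV \<and> ucode c < ucode a)))"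
  proof (intro ballI impI)
    fix a b assume "\<not> jP a b"
    then have ab: "a = V" "b = U" by (auto simp: jP_def)
    show "\<exists>r \<in> fideal UNIV {jordan_rel :: uv list \<Rightarrow> 'k}. r [a,b] = 1 \<and>
               (\<forall>v. r v \<noteq> 0 \<longrightarrow> v = [a,b] \<or> (\<exists>c d. v = [c,d] \<and> c \<in> UNIV \<and> d \<in> UNIV \<and> ucode c < ucode a))"
    proof (rule bexI[of _ jordan_rel], intro conjI allI impI)
      show "(jordan_rel :: uv list \<Rightarrow> 'k) [a, b] = 1" unfolding ab jordan_rel_def by (simp add: fword_apply)
      fix v assume "(jordan_rel :: uv list \<Rightarrow> 'k) v \<noteq> 0"
      then have "v = [V,U] \<or> v = [U,V] \<or> v = [U,U]"
        unfolding jordan_rel_def by (auto simp: fword_apply split: if_splits)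
      then show "v = [a,b] \<or> (\<exists>c d. v = [c,d] \<and> c \<in> UNIV \<and> d \<in> UNIV \<and> ucode c < ucode a)"
        using ab by auto
    qed (rule fideal.gen, simp)
  qed
  have codeB: "\<forall>x\<in>UNIV. ucode x < 2"
  proof
    fix x show "ucode x < 2" by (cases x) simp_all
  qed
  have RA: "{jordan_rel :: uv list \<Rightarrow> 'k} \<subseteq> falg UNIV" using jordan_rel_falg by auto
  show ?thesis
    using rewrite_all[OF RA codeB red assms] by (simp add: jordan_ideal_def)
qed

lemma indep:
  fixes q :: "uv list \<Rightarrow> 'k::field_char_0"
  assumes sq: "\<forall>v. q v \<noteq> 0 \<longrightarrow> (\<exists>a b. v = uvw a b)" and E: "\<forall>e d. Em q e d = 0"
  shows "q = 0"
proof -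
  have main: "q (uvw (d - m) m) = 0" if "m \<le> d" for d m
  proof -
    have Emd: "Em q e d = (\<Sum>b\<le>d. q (uvw (d - b) b) * pochhammer e b)" for e
    proof -
      let ?f = "\<lambda>b. uvw (d - b) b"
      have inj: "inj_on ?f {..d}"
      proof (rule inj_onI)
        fix x y assume "x \<in> {..d}" "y \<in> {..d}" "?f x = ?f y"
        then show "x = y" using uvw_inj by blast
      qed
      have "Em q e d = (\<Sum>w\<in>?f ` {..d}. q w * evw w e)"
        unfolding Em_def
      proof (rule sum.mono_neutral_right[OF finite_len])
        show "?f ` {..d} \<subseteq> {w. length w = d}" by auto
        show "\<forall>w\<in>{w. length w = d} - ?f ` {..d}. q w * evw w e = 0"
        proof
          fix w assume w: "w \<in> {w. length w = d} - ?f ` {..d}"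
          show "q w * evw w e = 0"
          proof (rule ccontr)
            assume "q w * evw w e \<noteq> 0"
            then have "q w \<noteq> 0" by auto
            then obtain a b where "w = uvw a b" using sq by blast
            moreover then have "a + b = d" using w by simp
            ultimately have "w \<in> ?f ` {..d}" by (intro image_eqI[where x=b]) auto
            then show False using w by blast
          qed
        qed
      qed
      also have "\<dots> = (\<Sum>b\<le>d. q (uvw (d - b) b) * evw (uvw (d - b) b) e)"
        by (simp add: sum.reindex[OF inj])
      finally show ?thesis by (simp add: evw_uvw)
    qed
    show ?thesis using that
    proof (induction m rule: less_induct)
      case (less m)
      let ?e = "- of_nat m :: 'k"
      have "0 = Em q ?e d" using E by simp
      also have "\<dots> = (\<Sum>b\<le>d. q (uvw (d - b) b) * pochhammer ?e b)" by (rule Emd)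
      also have "\<dots> = q (uvw (d - m) m) * pochhammer ?e m + (\<Sum>b\<in>{..d} - {m}. q (uvw (d - b) b) * pochhammer ?e b)"
        using less.prems by (subst sum.remove[of _ m]) auto
      also have "(\<Sum>b\<in>{..d} - {m}. q (uvw (d - b) b) * pochhammer ?e b) = 0"
      proof (rule sum.neutral, rule ballI)
        fix b assume b: "b \<in> {..d} - {m}"
        show "q (uvw (d - b) b) * pochhammer ?e b = 0"
        proof (cases "b < m")
          case True then show ?thesis using less.IH[of b] b by simp
        next
          case False
          then have "m < b" using b by auto
          then have "pochhammer ?e b = 0" by (auto simp: pochhammer_eq_0_iff)
          then show ?thesis by simp
        qed
      qed
      finally have "q (uvw (d - m) m) * pochhammer ?e m = 0" by simp
      moreover have "pochhammer ?e m \<noteq> 0" by (auto simp: pochhammer_eq_0_iff)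
      ultimately show ?case by simp
    qed
  qed
  show ?thesis
  proof
    fix v
    show "q v = 0 v"
    proof (rule ccontr)
      assume "q v \<noteq> 0 v"
      then have "q v \<noteq> 0" by simp
      then obtain a b where v: "v = uvw a b" using sq by blast
      have "q (uvw (a + b - b) b) = 0" by (rule main) simp
      then show False using \<open>q v \<noteq> 0\<close> v by simp
    qed
  qed
qed

lemma complete:
  fixes q :: "uv list \<Rightarrow> 'k::field_char_0"
  assumes "q \<in> falg UNIV" "\<forall>e d. Em q e d = 0"
  shows "q \<in> jordan_ideal"
proof -
  obtain q' where q': "q' \<in> falg UNIV" "\<forall>v. q' v \<noteq> 0 \<longrightarrow> successively jP v \<and> (\<exists>u. q u \<noteq> 0 \<and> length u = length v)"
    "q - q' \<in> jordan_ideal"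
    using jordan_rewrite[OF assms(1)] by blast
  have "q' = q - (q - q')" by simp
  then have "Em q' e d = 0" for e d
    using assms(2) Em_kill[OF q'(3)] by (metis Em_diff diff_zero)
  then have "q' = 0" using q'(2) jnormal_form by (intro indep) auto
  then show ?thesis using q'(3) by simp
qed


definition cc :: "nat \<Rightarrow> 'k::field_char_0" where
  "cc a = (-1) ^ a / fact a"

lemma cc_nonzero: "cc a \<noteq> 0" by (simp add: cc_def)

lemma jgen_alt: "jgen n a = fsmult (cc a) (fword (uvw (n - a) a))"
  by (simp add: jgen_def cc_def uvw_def)

lemma fmono_words:
  fixes f :: "'a \<Rightarrow> 'b list \<Rightarrow> 'k::comm_ring_1"
  assumes "\<And>a. f a = fsmult (c a) (fword (g a))"
  shows "fmono f w = fsmult (prod_list (map c w)) (fword (concat (map g w)))"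
proof (induction w)
  case Nil then show ?case by simp
next
  case (Cons a w)
  have "fmono f (a # w) = fmul (f a) (fmono f w)" by (rule fmono_Cons)
  also have "\<dots> = fmul (fsmult (c a) (fword (g a))) (fsmult (prod_list (map c w)) (fword (concat (map g w))))"
    by (simp only: assms Cons.IH)
  also have "\<dots> = fsmult (c a * prod_list (map c w)) (fword (g a @ concat (map g w)))"
    by (simp only: fmul_smult_left fmul_smult_right fmul_word fsmult_fsmult) (simp add: mult.commute)
  finally show ?case by simp
qed

lemma fmono_jgen:
  "fmono (jgen n) w = fsmult (prod_list (map cc w)) (fword (concat (map (\<lambda>a. uvw (n - a) a) w)))"
  by (rule fmono_words) (rule jgen_alt)

lemma fsubst_jgen_falg: "fsubst (jgen n) p \<in> falg UNIV"
proof (cases "finite (spt p)")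
  case True
  then show ?thesis unfolding fsubst_alt fmono_jgen
    by (intro falg_sum falg_smult falg_fword) auto
next
  case False
  then show ?thesis unfolding fsubst_alt by (simp add: falg_zero)
qed

lemma Em_fmono2:
  assumes "a \<le> n" "b \<le> n"
  shows "Em (fmono (jgen n) [a,b]) e d = cc a * cc b * (if d = n + n then pochhammer (e + of_nat n) a * pochhammer e b else 0)"
  unfolding fmono_jgen using assms by (simp add: Em_smult Em_fword evw_append evw_uvw)

lemma gg: "cc a * pochhammer x a = ((- x) gchoose a)"
  by (simp add: gbinomial_pochhammer cc_def)

lemma gsym:
  fixes x :: "'k::field_char_0"
  shows "(x gchoose i) * ((x - of_nat i) gchoose j) = (x gchoose j) * ((x - of_nat j) gchoose i)"
proof -
  let ?z = "x - of_nat i - of_nat j + 1"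
  have A: "(x gchoose i) * ((x - of_nat i) gchoose j) = pochhammer ?z (j + i) / (fact i * fact j)"
  proof -
    have "pochhammer ?z (j + i) = pochhammer ?z j * pochhammer (?z + of_nat j) i"
      by (rule pochhammer_product')
    moreover have "?z + of_nat j = x - of_nat i + 1" by simp
    ultimately show ?thesis unfolding gbinomial_pochhammer' by (simp add: field_simps)
  qed
  have B: "(x gchoose j) * ((x - of_nat j) gchoose i) = pochhammer ?z (i + j) / (fact i * fact j)"
  proof -
    have "pochhammer ?z (i + j) = pochhammer ?z i * pochhammer (?z + of_nat i) j"
      by (rule pochhammer_product')
    moreover have "?z + of_nat i = x - of_nat j + 1" by simp
    moreover have "x - of_nat j - of_nat i + 1 = ?z" by simp
    ultimately show ?thesis unfolding gbinomial_pochhammer' by (simp add: field_simps)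
  qed
  show ?thesis using A B by (simp add: add.commute)
qed

lemma vander:
  fixes y :: "'k::field_char_0"
  shows "(\<Sum>k\<le>j. of_nat (m choose k) * ((- y) gchoose (j - k))) = ((of_nat m - y) gchoose j)"
proof -
  have "(\<Sum>k\<le>j. of_nat (m choose k) * ((- y) gchoose (j - k))) = (\<Sum>k=0..j. (of_nat m gchoose k) * ((- y) gchoose (j - k)))"
    by (simp add: binomial_gbinomial atLeast0AtMost)
  also have "\<dots> = (of_nat m + - y) gchoose j" by (rule gbinomial_Vandermonde)
  finally show ?thesis by simp
qed

lemma rel1_ident:
  fixes e :: "'k::field_char_0"
  assumes "i \<le> n" "j \<le> n"
  shows "(\<Sum>k\<le>j. of_nat ((n - i) choose k) * (cc (j - k) * cc i * (pochhammer (e + of_nat n) (j - k) * pochhammer e i)))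
       - (\<Sum>l\<le>i. of_nat ((n - j) choose l) * (cc (i - l) * cc j * (pochhammer (e + of_nat n) (i - l) * pochhammer e j))) = 0"
proof -
  have 1: "(\<Sum>k\<le>j. of_nat ((n - i) choose k) * (cc (j - k) * cc i * (pochhammer (e + of_nat n) (j - k) * pochhammer e i)))
        = (\<Sum>k\<le>j. of_nat ((n - i) choose k) * (cc (j - k) * pochhammer (e + of_nat n) (j - k))) * (cc i * pochhammer e i)"
    by (simp add: sum_distrib_left sum_distrib_right mult_ac)
  have 2: "(\<Sum>l\<le>i. of_nat ((n - j) choose l) * (cc (i - l) * cc j * (pochhammer (e + of_nat n) (i - l) * pochhammer e j)))
        = (\<Sum>l\<le>i. of_nat ((n - j) choose l) * (cc (i - l) * pochhammer (e + of_nat n) (i - l))) * (cc j * pochhammer e j)"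
    by (simp add: sum_distrib_left sum_distrib_right mult_ac)
  have 3: "of_nat (n - i) - (e + of_nat n) = - e - of_nat i"
    using assms(1) by (simp add: of_nat_diff)
  have 4: "of_nat (n - j) - (e + of_nat n) = - e - of_nat j"
    using assms(2) by (simp add: of_nat_diff)
  show ?thesis unfolding 1 2 gg vander 3 4
    using gsym[of "- e" i j] by (simp add: mult.commute)
qed

lemma cc_Suc: "of_nat (Suc a) * cc (Suc a) = - (cc a :: 'k::field_char_0)"
  by (simp add: cc_def fact_Suc field_simps del: of_nat_Suc)

lemma rel2_ident:
  fixes e :: "'k::field_char_0"
  shows "of_nat (Suc i') * (cc (Suc i') * cc j * (pochhammer (e + of_nat n) (Suc i') * pochhammer e j))
       - of_nat (Suc j) * (cc i' * cc (Suc j) * (pochhammer (e + of_nat n) i' * pochhammer e (Suc j)))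
       + of_int (int n - 1 - (int j - int (Suc i'))) * (cc i' * cc j * (pochhammer (e + of_nat n) i' * pochhammer e j)) = 0"
proof -
  let ?G = "cc i' * cc j * pochhammer (e + of_nat n) i' * pochhammer e j"
  have a: "of_nat (Suc i') * (cc (Suc i') * cc j * (pochhammer (e + of_nat n) (Suc i') * pochhammer e j))
        = - ?G * (e + of_nat n + of_nat i')"
  proof -
    have "of_nat (Suc i') * (cc (Suc i') * cc j * (pochhammer (e + of_nat n) (Suc i') * pochhammer e j))
       = (of_nat (Suc i') * cc (Suc i')) * cc j * (pochhammer (e + of_nat n) i' * (e + of_nat n + of_nat i') * pochhammer e j)"
      by (simp add: pochhammer_Suc mult_ac)
    then show ?thesis unfolding cc_Suc by (simp add: mult_ac)
  qed
  have b: "of_nat (Suc j) * (cc i' * cc (Suc j) * (pochhammer (e + of_nat n) i' * pochhammer e (Suc j)))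
        = - ?G * (e + of_nat j)"
  proof -
    have "of_nat (Suc j) * (cc i' * cc (Suc j) * (pochhammer (e + of_nat n) i' * pochhammer e (Suc j)))
       = (of_nat (Suc j) * cc (Suc j)) * cc i' * (pochhammer (e + of_nat n) i' * (pochhammer e j * (e + of_nat j)))"
      by (simp add: pochhammer_Suc mult_ac)
    then show ?thesis unfolding cc_Suc by (simp add: mult_ac)
  qed
  have c: "(of_int (int n - 1 - (int j - int (Suc i'))) :: 'k) = of_nat n - of_nat j + of_nat i'"
    by simp
  show ?thesis unfolding a b c by (simp add: algebra_simps)
qed


lemma fsubst_rel1:
  "fsubst (jgen n) (rel1 n i j) =
     (\<Sum>k\<le>j. fsmult (of_nat ((n - i) choose k)) (fmono (jgen n) [j - k, i]))
   - (\<Sum>l\<le>i. fsmult (of_nat ((n - j) choose l)) (fmono (jgen n) [i - l, j]))"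
  unfolding rel1_def
  by (subst fsubst_diff) (auto intro!: fsupp_sum fsupp_smult fsupp_fword simp: fsubst_sum fsupp_smult fsupp_fword fsubst_smult_word)

lemma fsubst_rel2:
  "fsubst (jgen n) (rel2 n i j) =
     fsmult (of_nat i) (fmono (jgen n) [i, j])
   - fsmult (of_nat (j + 1)) (fmono (jgen n) [i - 1, j + 1])
   + fsmult (of_int (int n - 1 - (int j - int i))) (fmono (jgen n) [i - 1, j])"
  unfolding rel2_def
  by (simp add: fsubst_add fsubst_diff fsupp_add fsupp_diff fsupp_smult fsupp_fword fsubst_smult_word)

lemma Em_rel1:
  assumes "i < j" "j \<le> n"
  shows "Em (fsubst (jgen n) (rel1 n i j)) e d = 0"
proof -
  have "Em (fsubst (jgen n) (rel1 n i j)) e d =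
     (\<Sum>k\<le>j. of_nat ((n - i) choose k) * Em (fmono (jgen n) [j - k, i]) e d)
   - (\<Sum>l\<le>i. of_nat ((n - j) choose l) * Em (fmono (jgen n) [i - l, j]) e d)"
    unfolding fsubst_rel1 by (simp only: Em_diff Em_sum Em_smult)
  also have "\<dots> = (\<Sum>k\<le>j. of_nat ((n - i) choose k) * (cc (j - k) * cc i * (if d = n + n then pochhammer (e + of_nat n) (j - k) * pochhammer e i else 0)))
   - (\<Sum>l\<le>i. of_nat ((n - j) choose l) * (cc (i - l) * cc j * (if d = n + n then pochhammer (e + of_nat n) (i - l) * pochhammer e j else 0)))"
    using assms by (simp add: Em_fmono2 del: fmono_Cons)
  also have "\<dots> = 0"
  proof (cases "d = n + n")
    case True
    then show ?thesis using rel1_ident[of i n j e] assms by simp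
  next
    case False then show ?thesis by simp
  qed
  finally show ?thesis .
qed

lemma Em_rel2:
  assumes "i' + 1 \<le> j" "j < n"
  shows "Em (fsubst (jgen n) (rel2 n (i' + 1) j)) e d = 0"
proof -
  have 1: "Em (fmono (jgen n) [i' + 1, j]) e d = cc (i' + 1) * cc j * (if d = n + n then pochhammer (e + of_nat n) (i' + 1) * pochhammer e j else 0)"
    by (rule Em_fmono2) (use assms in auto)
  have 2: "Em (fmono (jgen n) [i', j + 1]) e d = cc i' * cc (j + 1) * (if d = n + n then pochhammer (e + of_nat n) i' * pochhammer e (j + 1) else 0)"
    by (rule Em_fmono2) (use assms in auto)
  have 3: "Em (fmono (jgen n) [i', j]) e d = cc i' * cc j * (if d = n + n then pochhammer (e + of_nat n) i' * pochhammer e j else 0)"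
    by (rule Em_fmono2) (use assms in auto)
  have "Em (fsubst (jgen n) (rel2 n (i' + 1) j)) e d =
      of_nat (i' + 1) * Em (fmono (jgen n) [i' + 1, j]) e d
    - of_nat (j + 1) * Em (fmono (jgen n) [i', j + 1]) e d
    + of_int (int n - 1 - (int j - int (i' + 1))) * Em (fmono (jgen n) [i', j]) e d"
    unfolding fsubst_rel2 by (simp only: Em_add Em_diff Em_smult add_diff_cancel_right')
  also have "\<dots> = 0"
  proof (cases "d = n + n")
    case True
    show ?thesis unfolding 1 2 3 using True rel2_ident[of i' j e n, unfolded Suc_eq_plus1] by simp
  next
    case False
    show ?thesis unfolding 1 2 3 using False by simp
  qed
  finally show ?thesis .
qed

lemma rel_in_J:
  assumes "r \<in> relsI n"
  shows "fsubst (jgen n) r \<in> (jordan_ideal :: (uv list \<Rightarrow> 'k::field_char_0) set)"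
proof (rule complete)
  show "fsubst (jgen n) r \<in> falg UNIV" by (rule fsubst_jgen_falg)
  show "\<forall>e d. Em (fsubst (jgen n) r :: uv list \<Rightarrow> 'k) e d = 0"
  proof (intro allI)
    fix e :: 'k and d
    from assms consider (a) i j where "r = rel1 n i j" "i < j" "j \<le> n"
      | (b) i j where "r = rel2 n i j" "1 \<le> i" "i \<le> j" "j < n"
      unfolding relsI_def by blast
    then show "Em (fsubst (jgen n) r) e d = 0"
    proof cases
      case a then show ?thesis using Em_rel1 by simp
    next
      case b
      then obtain i' where "i = i' + 1" by (metis add.commute le_Suc_ex plus_1_eq_Suc)
      then show ?thesis using b Em_rel2[of i' j n e d] by simp
    qed
  qed
qed

lemma rel1_falg:
  assumes "i < j" "j \<le> n"
  shows "(rel1 n i j :: nat list \<Rightarrow> 'k::field_char_0) \<in> falg {..n}"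
  unfolding rel1_def using assms
  by (intro falg_diff falg_sum falg_smult falg_fword) auto

lemma rel2_falg:
  assumes "1 \<le> i" "i \<le> j" "j < n"
  shows "(rel2 n i j :: nat list \<Rightarrow> 'k::field_char_0) \<in> falg {..n}"
  unfolding rel2_def using assms
  by (intro falg_add falg_diff falg_smult falg_fword) auto

lemma relsI_falg: "relsI n \<subseteq> (falg {..n} :: (nat list \<Rightarrow> 'k::field_char_0) set)"
  unfolding relsI_def using rel1_falg rel2_falg by blast

lemma partC:
  assumes "p \<in> fideal {..n} (relsI n)"
  shows "fsubst (jgen n) p \<in> (jordan_ideal :: (uv list \<Rightarrow> 'k::field_char_0) set)"
  using assms
proof induction
  case (gen r) then show ?case by (rule rel_in_J)
next
  case zero
  have z: "(\<lambda>a. 0 :: 'k) = 0" by (simp add: zero_fun_def)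
  have "fsubst (jgen n) (0 :: nat list \<Rightarrow> 'k) \<in> (jordan_ideal :: (uv list \<Rightarrow> 'k) set)"
    unfolding fsubst_zero jordan_ideal_def by (rule fideal.zero)
  then show ?case unfolding z .
next
  case (add a b)
  have fa: "fsupp a" "fsupp b" using fideal_falg[OF relsI_falg] add.hyps falg_fsupp by blast+
  have e1: "(\<lambda>c. a c + b c) = a + b" by (simp add: plus_fun_def)
  have "fsubst (jgen n) (a + b) \<in> (jordan_ideal :: (uv list \<Rightarrow> 'k) set)"
    unfolding fsubst_add[OF fa] using add.IH unfolding jordan_ideal_def by (rule fideal.add)
  then show ?case unfolding e1 .
next
  case (lmul a c)
  have "fsupp a" using fideal_falg[OF relsI_falg] lmul.hyps falg_fsupp by blast
  moreover have "fsupp c" using lmul.hyps falg_fsupp by blast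
  ultimately have "fsubst (jgen n) (fmul c a) = fmul (fsubst (jgen n) c) (fsubst (jgen n) a)"
    by (simp add: fsubst_fmul)
  moreover have "fmul (fsubst (jgen n) c) (fsubst (jgen n) a) \<in> (jordan_ideal :: (uv list \<Rightarrow> 'k) set)"
    using lmul.IH unfolding jordan_ideal_def by (rule fideal.lmul) (rule fsubst_jgen_falg)
  ultimately show ?case by simp
next
  case (rmul a c)
  have "fsupp a" using fideal_falg[OF relsI_falg] rmul.hyps falg_fsupp by blast
  moreover have "fsupp c" using rmul.hyps falg_fsupp by blast
  ultimately have "fsubst (jgen n) (fmul a c) = fmul (fsubst (jgen n) a) (fsubst (jgen n) c)"
    by (simp add: fsubst_fmul)
  moreover have "fmul (fsubst (jgen n) a) (fsubst (jgen n) c) \<in> (jordan_ideal :: (uv list \<Rightarrow> 'k) set)"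
    using rmul.IH unfolding jordan_ideal_def by (rule fideal.rmul) (rule fsubst_jgen_falg)
  ultimately show ?case by simp
qed


definition xP :: "nat \<Rightarrow> nat \<Rightarrow> nat \<Rightarrow> bool" where
  "xP n a b \<longleftrightarrow> a \<le> b \<and> (a = 0 \<or> b = n)"

lemma sum_le: "set w \<subseteq> {..n} \<Longrightarrow> sum_list w \<le> n * length w"
  by (induction w) auto

lemma all_n: "successively (xP n) (x # w) \<Longrightarrow> 0 < x \<Longrightarrow> \<forall>y\<in>set w. y = n"
proof (induction w arbitrary: x)
  case Nil then show ?case by simp
next
  case (Cons y w)
  then have "xP n x y" "successively (xP n) (y # w)" by simp_all
  then have "y = n" "0 < y" using Cons.prems(2) by (auto simp: xP_def)
  then show ?case using Cons.IH[OF \<open>successively (xP n) (y # w)\<close>] by simp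
qed

lemma concat_all_n: "\<forall>y\<in>set w. y = n \<Longrightarrow>
    concat (map (\<lambda>a. uvw (n - a) a) w) = replicate (n * length w) V \<and> sum_list w = n * length w"
proof (induction w)
  case Nil then show ?case by simp
next
  case (Cons y w)
  then have "y = n" by simp
  then show ?case using Cons by (simp add: uvw_def replicate_add)
qed

lemma length_concat_blk: "set w \<subseteq> {..n} \<Longrightarrow> length (concat (map (\<lambda>a. uvw (n - a) a) w)) = n * length w"
  by (induction w) auto

lemma concat_normal:
  "successively (xP n) w \<Longrightarrow> set w \<subseteq> {..n} \<Longrightarrow>
    concat (map (\<lambda>a. uvw (n - a) a) w) = uvw (n * length w - sum_list w) (sum_list w)"
proof (induction w)
  case Nil then show ?case by (simp add: uvw_def)
next
  case (Cons x w)
  have sw: "successively (xP n) w" using Cons.prems(1) by (auto simp: successively_Cons)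
  have xn: "x \<le> n" and wn: "set w \<subseteq> {..n}" using Cons.prems(2) by auto
  show ?case
  proof (cases "x = 0")
    case True
    have le: "sum_list w \<le> n * length w" using sum_le[OF wn] .
    have "concat (map (\<lambda>a. uvw (n - a) a) (x # w)) = replicate n U @ uvw (n * length w - sum_list w) (sum_list w)"
      using Cons.IH[OF sw wn] True by (simp add: uvw_def)
    also have "\<dots> = uvw (n * length (x # w) - sum_list (x # w)) (sum_list (x # w))"
      using True le by (simp add: uvw_def replicate_add[symmetric])
    finally show ?thesis .
  next
    case False
    then have "\<forall>y\<in>set w. y = n" using all_n Cons.prems(1) by blast
    from concat_all_n[OF this] have c: "concat (map (\<lambda>a. uvw (n - a) a) w) = replicate (n * length w) V"
      and s: "sum_list w = n * length w" by auto
    have "concat (map (\<lambda>a. uvw (n - a) a) (x # w)) = uvw (n - x) (x + n * length w)"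
      using c by (simp add: uvw_def replicate_add)
    also have "n - x = n * length (x # w) - sum_list (x # w)" using s xn by simp
    finally show ?thesis using s by simp
  qed
qed

lemma normal_inj:
  "successively (xP n) w \<Longrightarrow> successively (xP n) w' \<Longrightarrow> set w \<subseteq> {..n} \<Longrightarrow> set w' \<subseteq> {..n} \<Longrightarrow>
   length w = length w' \<Longrightarrow> sum_list w = sum_list w' \<Longrightarrow> w = w'"
proof (induction w arbitrary: w')
  case Nil then show ?case by simp
next
  case (Cons x u)
  then obtain y u' where w': "w' = y # u'" by (cases w') auto
  have su: "successively (xP n) u" using Cons.prems(1) by (auto simp: successively_Cons)
  have su': "successively (xP n) u'" using Cons.prems(2) w' by (auto simp: successively_Cons)
  have un: "set u \<subseteq> {..n}" "x \<le> n" using Cons.prems(3) by auto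
  have un': "set u' \<subseteq> {..n}" "y \<le> n" using Cons.prems(4) w' by auto
  have len: "length u = length u'" using Cons.prems(5) w' by simp
  have key: False if "a < b" "successively (xP n) (a # v)" "successively (xP n) (b # v')"
      "set v \<subseteq> {..n}" "length v = length v'" "a + sum_list v = b + sum_list v'" for a b v v'
  proof -
    have "\<forall>z\<in>set v'. z = n" using all_n that(1,3) by (metis gr_zeroI not_less0)
    then have "sum_list v' = n * length v'" using concat_all_n by blast
    moreover have "sum_list v \<le> n * length v" using sum_le[OF that(4)] .
    ultimately show False using that(1,5,6) by simp
  qed
  show ?case
  proof (cases "x = y")
    case True
    then have "sum_list u = sum_list u'" using Cons.prems(6) w' by simp
    then show ?thesis using Cons.IH[OF su su' un(1) un'(1) len] True w' by simp
  next
    case False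
    then consider "x < y" | "y < x" by linarith
    then show ?thesis
    proof cases
      case 1 then show ?thesis using key[of x y u u'] Cons.prems w' un len by simp
    next
      case 2 then show ?thesis using key[of y x u' u] Cons.prems w' un' len by simp
    qed
  qed
qed

lemma successively_rep_n: "successively (xP n) (replicate k n)"
proof (induction k)
  case (Suc k) then show ?case by (cases k) (auto simp: xP_def)
qed simp

lemma normal_exists:
  "b \<le> k * n \<Longrightarrow> \<exists>w. set w \<subseteq> {..n} \<and> successively (xP n) w \<and> length w = k \<and> sum_list w = b"
proof (induction k arbitrary: b)
  case 0 then show ?case by (intro exI[of _ "[]"]) simp
next
  case (Suc k)
  show ?case
  proof (cases "b \<le> k * n")
    case True
    then obtain w where w: "set w \<subseteq> {..n}" "successively (xP n) w" "length w = k" "sum_list w = b"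
      using Suc.IH by blast
    have "successively (xP n) (0 # w)" using w(2) by (auto simp: successively_Cons xP_def)
    then show ?thesis using w by (intro exI[of _ "0 # w"]) auto
  next
    case False
    let ?x = "b - k * n"
    have x: "?x \<le> n" "0 < ?x" using False Suc.prems by auto
    have "successively (xP n) (?x # replicate k n)"
      using successively_rep_n[of n k] x by (cases k) (auto simp: xP_def)
    moreover have "sum_list (replicate k n) = k * n" by (simp add: sum_list_replicate)
    ultimately show ?thesis using x False
      by (intro exI[of _ "?x # replicate k n"]) auto
  qed
qed

lemma rel1_apply:
  "rel1 n i j v = (\<Sum>k\<le>j. of_nat ((n - i) choose k) * (if v = [j - k, i] then 1 else 0))
               - (\<Sum>l\<le>i. of_nat ((n - j) choose l) * (if v = [i - l, j] then 1 else 0))"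
  by (simp add: rel1_def sum_fun_apply fword_apply)

lemma rel2_apply:
  "rel2 n i j v = of_nat i * (if v = [i, j] then 1 else 0)
      - of_nat (j + 1) * (if v = [i - 1, j + 1] then 1 else 0)
      + of_int (int n - 1 - (int j - int i)) * (if v = [i - 1, j] then 1 else 0)"
  by (simp add: rel2_def fword_apply)

lemma x_red:
  assumes "a \<le> n" "b \<le> n" "\<not> xP n a b"
  shows "\<exists>r \<in> fideal {..n} (relsI n :: (nat list \<Rightarrow> 'k::field_char_0) set). r [a,b] = 1 \<and>
          (\<forall>v. r v \<noteq> 0 \<longrightarrow> v = [a,b] \<or> (\<exists>c d. v = [c,d] \<and> c \<in> {..n} \<and> d \<in> {..n} \<and> id c < id a))"
proof (cases "b < a")
  case True
  let ?r = "rel1 n b a :: nat list \<Rightarrow> 'k"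
  have inI: "?r \<in> fideal {..n} (relsI n)"
    by (rule fideal.gen) (use True assms in \<open>auto simp: relsI_def\<close>)
  have v1: "?r [a,b] = 1"
  proof -
    have "(\<Sum>k\<le>a. of_nat ((n - b) choose k) * (if [a,b] = [a - k, b] then 1 else 0) :: 'k)
        = (\<Sum>k\<le>a. if k = 0 then 1 else 0)"
      by (intro sum.cong refl) (use True in auto)
    moreover have "(\<Sum>l\<le>b. of_nat ((n - a) choose l) * (if [a,b] = [b - l, a] then 1 else 0) :: 'k) = 0"
      by (intro sum.neutral) (use True in auto)
    ultimately show ?thesis unfolding rel1_apply by simp
  qed
  show ?thesis
  proof (rule bexI[OF _ inI], intro conjI allI impI)
    show "?r [a,b] = 1" by (rule v1)
    fix v assume "?r v \<noteq> 0"
    then have "(\<Sum>k\<le>a. of_nat ((n - b) choose k) * (if v = [a - k, b] then 1 else 0) :: 'k) \<noteq> 0 \<or>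
               (\<Sum>l\<le>b. of_nat ((n - a) choose l) * (if v = [b - l, a] then 1 else 0) :: 'k) \<noteq> 0"
      unfolding rel1_apply by auto
    then have "(\<exists>k\<le>a. v = [a - k, b]) \<or> (\<exists>l\<le>b. v = [b - l, a])"
    proof
      assume "(\<Sum>k\<le>a. of_nat ((n - b) choose k) * (if v = [a - k, b] then 1 else 0) :: 'k) \<noteq> 0"
      then obtain k where "k \<in> {..a}" "(of_nat ((n - b) choose k) * (if v = [a - k, b] then 1 else 0) :: 'k) \<noteq> 0"
        by (rule sum.not_neutral_contains_not_neutral)
      then show ?thesis by (auto split: if_splits)
    next
      assume "(\<Sum>l\<le>b. of_nat ((n - a) choose l) * (if v = [b - l, a] then 1 else 0) :: 'k) \<noteq> 0"
      then obtain l where "l \<in> {..b}" "(of_nat ((n - a) choose l) * (if v = [b - l, a] then 1 else 0) :: 'k) \<noteq> 0"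
        by (rule sum.not_neutral_contains_not_neutral)
      then show ?thesis by (auto split: if_splits)
    qed
    then show "v = [a,b] \<or> (\<exists>c d. v = [c,d] \<and> c \<in> {..n} \<and> d \<in> {..n} \<and> id c < id a)"
    proof
      assume "\<exists>k\<le>a. v = [a - k, b]"
      then obtain k where "k \<le> a" "v = [a - k, b]" by blast
      show ?thesis
      proof (cases "k = 0")
        case True then show ?thesis using \<open>v = [a - k, b]\<close> by simp
      next
        case False then show ?thesis using \<open>v = [a - k, b]\<close> \<open>k \<le> a\<close> assms \<open>b < a\<close> by auto
      qed
    next
      assume "\<exists>l\<le>b. v = [b - l, a]"
      then obtain l where "l \<le> b" "v = [b - l, a]" by blast
      then show ?thesis using assms \<open>b < a\<close> by auto
    qed
  qed
next
  case False
  then have ab: "1 \<le> a" "a \<le> b" "b < n" using assms by (auto simp: xP_def)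
  let ?r = "fsmult (1 / of_nat a) (rel2 n a b) :: nat list \<Rightarrow> 'k"
  have inI: "?r \<in> fideal {..n} (relsI n)"
    by (intro fideal_smult fideal.gen) (use ab in \<open>auto simp: relsI_def\<close>)
  show ?thesis
  proof (rule bexI[OF _ inI], intro conjI allI impI)
    have h: "a \<noteq> a - Suc 0" using ab by simp
    show "?r [a,b] = 1" using ab h by (simp add: rel2_apply)
    fix v assume "?r v \<noteq> 0"
    then have "rel2 n a b v \<noteq> (0::'k)" by simp
    then have "v = [a,b] \<or> v = [a - 1, b + 1] \<or> v = [a - 1, b]"
      unfolding rel2_apply by (cases "v = [a,b]"; cases "v = [a - 1, b + 1]"; cases "v = [a - 1, b]") simp_all
    then show "v = [a,b] \<or> (\<exists>c d. v = [c,d] \<and> c \<in> {..n} \<and> d \<in> {..n} \<and> id c < id a)"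
      using ab by auto
  qed
qed

lemma x_rewrite:
  fixes p :: "nat list \<Rightarrow> 'k::field_char_0"
  assumes "p \<in> falg {..n}"
  shows "\<exists>p'. p' \<in> falg {..n} \<and> (\<forall>v. p' v \<noteq> 0 \<longrightarrow> successively (xP n) v \<and> (\<exists>u. p u \<noteq> 0 \<and> length u = length v))
                \<and> p - p' \<in> fideal {..n} (relsI n)"
proof (rule rewrite_all[OF relsI_falg _ _ assms])
  show "\<forall>x\<in>{..n}. id x < Suc n" by auto
  show "\<forall>a\<in>{..n}. \<forall>b\<in>{..n}. \<not> xP n a b \<longrightarrow> (\<exists>r \<in> fideal {..n} (relsI n :: (nat list \<Rightarrow> 'k) set). r [a,b] = 1 \<and>
          (\<forall>v. r v \<noteq> 0 \<longrightarrow> v = [a,b] \<or> (\<exists>c d. v = [c,d] \<and> c \<in> {..n} \<and> d \<in> {..n} \<and> id c < id a)))"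
    using x_red by blast
qed


lemma prod_cc_nonzero: "prod_list (map cc w) \<noteq> (0::'k::field_char_0)"
  by (induction w) (simp_all add: cc_nonzero)

lemma partA:
  fixes p :: "nat list \<Rightarrow> 'k::field_char_0"
  assumes "p \<in> falg {..n}"
  shows "veronese n (fsubst (jgen n) p)"
  unfolding veronese_def
proof (intro conjI allI impI)
  show "fsubst (jgen n) p \<in> falg UNIV" by (rule fsubst_jgen_falg)
  fix w assume "fsubst (jgen n) p w \<noteq> 0"
  then have "(\<Sum>u\<in>spt p. p u * fmono (jgen n) u w) \<noteq> 0" by (simp add: fsubst_alt sum_fun_apply)
  then obtain u where u: "u \<in> spt p" "p u * fmono (jgen n) u w \<noteq> 0"
    by (rule sum.not_neutral_contains_not_neutral)
  then have "w = concat (map (\<lambda>a. uvw (n - a) a) u)"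
    by (simp add: fmono_jgen fword_apply split: if_splits)
  moreover have "set u \<subseteq> {..n}" using u(1) assms by (auto simp: falg_iff)
  ultimately have "length w = n * length u" using length_concat_blk by simp
  then show "n dvd length w" by simp
qed

lemma partB:
  fixes q :: "uv list \<Rightarrow> 'k::field_char_0"
  assumes n0: "0 < n" and vq: "veronese n q"
  shows "\<exists>p \<in> falg {..n}. fsubst (jgen n) p - q \<in> jordan_ideal"
proof -
  have qA: "q \<in> falg UNIV" and qd: "\<forall>w. q w \<noteq> 0 \<longrightarrow> n dvd length w" using vq by (auto simp: veronese_def)
  obtain q' where q': "q' \<in> falg UNIV" "\<forall>v. q' v \<noteq> 0 \<longrightarrow> successively jP v \<and> (\<exists>u. q u \<noteq> 0 \<and> length u = length v)"
      "q - q' \<in> jordan_ideal"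
    using jordan_rewrite[OF qA] by blast
  have "\<forall>v\<in>spt q'. \<exists>w. set w \<subseteq> {..n} \<and> concat (map (\<lambda>a. uvw (n - a) a) w) = v"
  proof
    fix v assume "v \<in> spt q'"
    then have sv: "successively jP v" and ex: "\<exists>u. q u \<noteq> 0 \<and> length u = length v" using q'(2) by auto
    then obtain a b where v: "v = uvw a b" using jnormal_form by blast
    have "n dvd length v" using ex qd by metis
    then obtain k where k: "a + b = n * k" using v by (auto elim: dvdE)
    then have "b \<le> k * n" by (simp add: mult.commute)
    then obtain w where w: "set w \<subseteq> {..n}" "successively (xP n) w" "length w = k" "sum_list w = b"
      using normal_exists by blast
    have "concat (map (\<lambda>a. uvw (n - a) a) w) = uvw (n * k - b) b" using concat_normal[OF w(2) w(1)] w by simp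
    also have "n * k - b = a" using k by simp
    finally show "\<exists>w. set w \<subseteq> {..n} \<and> concat (map (\<lambda>a. uvw (n - a) a) w) = v" using w(1) v by blast
  qed
  from bchoice[OF this] obtain xw where xw: "\<forall>v\<in>spt q'. set (xw v) \<subseteq> {..n} \<and> concat (map (\<lambda>a. uvw (n - a) a) (xw v)) = v" ..
  have finq': "finite (spt q')" using q'(1) by (simp add: falg_iff fsupp_spt)
  define p where "p = (\<Sum>v\<in>spt q'. fsmult (q' v / prod_list (map cc (xw v))) (fword (xw v)))"
  have pA: "p \<in> falg {..n}" unfolding p_def
    by (intro falg_sum finq' falg_smult falg_fword) (use xw in auto)
  have "fsubst (jgen n) p = (\<Sum>v\<in>spt q'. fsmult (q' v / prod_list (map cc (xw v))) (fmono (jgen n) (xw v)))"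
    unfolding p_def by (simp add: fsubst_sum finq' fsupp_smult fsupp_fword fsubst_smult_word)
  also have "\<dots> = (\<Sum>v\<in>spt q'. fsmult (q' v) (fword v))"
  proof (rule sum.cong[OF refl])
    fix v assume "v \<in> spt q'"
    then have c: "concat (map (\<lambda>a. uvw (n - a) a) (xw v)) = v" using xw by blast
    have nz: "prod_list (map cc (xw v)) \<noteq> (0::'k)" by (rule prod_cc_nonzero)
    show "fsmult (q' v / prod_list (map cc (xw v))) (fmono (jgen n) (xw v)) = fsmult (q' v) (fword v)"
      unfolding fmono_jgen c fsmult_fsmult using nz by simp
  qed
  also have "\<dots> = q'" using decomp[OF falg_fsupp[OF q'(1)]] by simp
  finally have fp: "fsubst (jgen n) p = q'" .
  have "fsubst (jgen n) p - q = fsmult (-1) (q - q')" unfolding fp by (rule ext) simp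
  moreover have "fsmult (-1) (q - q') \<in> jordan_ideal"
    using q'(3) unfolding jordan_ideal_def by (rule fideal_smult)
  ultimately have "fsubst (jgen n) p - q \<in> (jordan_ideal :: (uv list \<Rightarrow> 'k) set)" by simp
  then show ?thesis using pA by blast
qed

lemma partD:
  fixes p :: "nat list \<Rightarrow> 'k::field_char_0"
  assumes n0: "0 < n" and pA: "p \<in> falg {..n}" and pJ: "fsubst (jgen n) p \<in> jordan_ideal"
  shows "p \<in> fideal {..n} (relsI n)"
proof -
  obtain p' where p': "p' \<in> falg {..n}" "\<forall>v. p' v \<noteq> 0 \<longrightarrow> successively (xP n) v \<and> (\<exists>u. p u \<noteq> 0 \<and> length u = length v)"
      "p - p' \<in> fideal {..n} (relsI n)"
    using x_rewrite[OF pA] by blast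
  have fsp: "fsupp p" "fsupp (p - p')" using pA p'(1) by (auto intro: falg_fsupp falg_diff)
  have "fsubst (jgen n) (p - (p - p')) = fsubst (jgen n) p - fsubst (jgen n) (p - p')"
    by (rule fsubst_diff[OF fsp])
  then have eqp': "fsubst (jgen n) p' = fsubst (jgen n) p - fsubst (jgen n) (p - p')" by simp
  have "fsubst (jgen n) p - fsubst (jgen n) (p - p') \<in> (jordan_ideal :: (uv list \<Rightarrow> 'k) set)"
    using pJ partC[OF p'(3)] unfolding jordan_ideal_def by (rule fideal_diff)
  then have J': "fsubst (jgen n) p' \<in> (jordan_ideal :: (uv list \<Rightarrow> 'k) set)" unfolding eqp' .
  have setp': "\<forall>w. p' w \<noteq> 0 \<longrightarrow> set w \<subseteq> {..n}" using p'(1) by (auto simp: falg_iff)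
  have finp': "finite (spt p')" using p'(1) by (simp add: falg_iff fsupp_spt)
  have fmono_n: "fmono (jgen n) w = fsmult (prod_list (map cc w)) (fword (uvw (n * length w - sum_list w) (sum_list w)))"
    if "w \<in> spt p'" for w
    using that p'(2) setp' by (simp add: fmono_jgen concat_normal)
  have S: "fsubst (jgen n) p' = (\<Sum>w\<in>spt p'. fsmult (p' w * prod_list (map cc w)) (fword (uvw (n * length w - sum_list w) (sum_list w))))"
    unfolding fsubst_alt by (intro sum.cong refl) (simp add: fmono_n)
  have Sv: "fsubst (jgen n) p' v = (\<Sum>w\<in>spt p'. p' w * prod_list (map cc w) * fword (uvw (n * length w - sum_list w) (sum_list w)) v)" for v
    unfolding S sum_fun_apply by simp
  have z: "fsubst (jgen n) p' = 0"
  proof (rule indep)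
    show "\<forall>v. fsubst (jgen n) p' v \<noteq> 0 \<longrightarrow> (\<exists>a b. v = uvw a b)"
    proof (intro allI impI)
      fix v assume "fsubst (jgen n) p' v \<noteq> 0"
      then have "(\<Sum>w\<in>spt p'. p' w * prod_list (map cc w) * fword (uvw (n * length w - sum_list w) (sum_list w)) v) \<noteq> 0"
        unfolding Sv .
      then obtain w where "w \<in> spt p'" "p' w * prod_list (map cc w) * fword (uvw (n * length w - sum_list w) (sum_list w)) v \<noteq> 0"
        by (rule sum.not_neutral_contains_not_neutral)
      then have "v = uvw (n * length w - sum_list w) (sum_list w)" by (simp add: fword_apply split: if_splits)
      then show "\<exists>a b. v = uvw a b" by blast
    qed
    show "\<forall>e d. Em (fsubst (jgen n) p') e d = 0" using Em_kill[OF J'] by blast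
  qed
  have "p' = 0"
  proof (rule ext, rule ccontr)
    fix w0 assume "p' w0 \<noteq> 0 w0"
    then have w0: "w0 \<in> spt p'" by simp
    let ?j0 = "uvw (n * length w0 - sum_list w0) (sum_list w0)"
    have "0 = fsubst (jgen n) p' ?j0" using z by simp
    also have "\<dots> = (\<Sum>w\<in>spt p'. p' w * prod_list (map cc w) * fword (uvw (n * length w - sum_list w) (sum_list w)) ?j0)"
      by (rule Sv)
    also have "\<dots> = (\<Sum>w\<in>spt p'. if w = w0 then p' w0 * prod_list (map cc w0) else 0)"
    proof (rule sum.cong[OF refl])
      fix w assume w: "w \<in> spt p'"
      show "p' w * prod_list (map cc w) * fword (uvw (n * length w - sum_list w) (sum_list w)) ?j0
           = (if w = w0 then p' w0 * prod_list (map cc w0) else 0)"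
      proof (cases "?j0 = uvw (n * length w - sum_list w) (sum_list w)")
        case True
        then have e: "n * length w0 - sum_list w0 = n * length w - sum_list w" "sum_list w0 = sum_list w"
          using uvw_inj by blast+
        have "sum_list w0 \<le> n * length w0" "sum_list w \<le> n * length w"
          using setp' w w0 sum_le by auto
        then have "n * length w0 = n * length w" using e by linarith
        then have "length w0 = length w" using n0 by simp
        then have "w = w0" using normal_inj[of n w w0] p'(2) setp' w w0 e(2) by auto
        then show ?thesis by (simp add: fword_apply)
      next
        case False
        then have "w \<noteq> w0" by auto
        then show ?thesis using False by (simp add: fword_apply)
      qed
    qed
    also have "\<dots> = p' w0 * prod_list (map cc w0)" using w0 finp' by (simp add: sum.delta)
    finally have "p' w0 * prod_list (map cc w0) = 0" by simp
    moreover have "prod_list (map cc w0) \<noteq> (0::'k)" by (rule prod_cc_nonzero)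
    ultimately show False using w0 by simp
  qed
  then show ?thesis using p'(3) by simp
qed

theorem mainTheorem12:
  fixes n :: nat
  assumes "n \<ge> 2"
    and alg_closed: "\<forall>p :: 'k::field_char_0 poly. degree p > 0 \<longrightarrow> (\<exists>x. poly p x = 0)"
  shows "(\<forall>p \<in> falg {..n}. veronese n (fsubst (jgen n :: nat \<Rightarrow> uv list \<Rightarrow> 'k) p))
       \<and> (\<forall>q :: uv list \<Rightarrow> 'k. veronese n q \<longrightarrow>
            (\<exists>p \<in> falg {..n}. fsubst (jgen n) p - q \<in> jordan_ideal))
       \<and> (\<forall>p \<in> falg {..n}. fsubst (jgen n :: nat \<Rightarrow> uv list \<Rightarrow> 'k) p \<in> jordan_ideal
            \<longleftrightarrow> p \<in> fideal {..n} (relsI n))"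
proof -
  have n0: "0 < n" using assms(1) by simp
  show ?thesis
  proof (intro conjI ballI allI impI)
    fix p :: "nat list \<Rightarrow> 'k" assume "p \<in> falg {..n}"
    then show "veronese n (fsubst (jgen n :: nat \<Rightarrow> uv list \<Rightarrow> 'k) p)" by (rule partA)
  next
    fix q :: "uv list \<Rightarrow> 'k" assume "veronese n q"
    then show "\<exists>p\<in>falg {..n}. fsubst (jgen n) p - q \<in> jordan_ideal" by (rule partB[OF n0])
  next
    fix p :: "nat list \<Rightarrow> 'k" assume pA: "p \<in> falg {..n}"
    show "fsubst (jgen n :: nat \<Rightarrow> uv list \<Rightarrow> 'k) p \<in> jordan_ideal \<longleftrightarrow> p \<in> fideal {..n} (relsI n)"
      using partC partD[OF n0 pA] by blast
  qed
qed


end
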